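(* Let $R$ be a noncommutative division algebra over a field $F$, and let $p\in F[x]$ be a nonconstant polynomial. Then there exist elements $\alpha,\beta\in R$ such that $p(\alpha\beta)\neq p(\beta\alpha)$. *)

theory Defs
  imports "HOL-Computational_Algebra.Polynomial"
begin

text \<open>An F-algebra structure on a ring R is given by a unital ring homomorphism
  from the field F into R whose image lies in the centre of R.\<close>
definition algebra_map :: "('f::field \<Rightarrow> 'r::ring_1) \<Rightarrow> bool" where
  "algebra_map \<phi> \<longleftrightarrow>
     \<phi> 0 = 0 \<and> \<phi> 1 = 1 \<and>
     (\<forall>a b. \<phi> (a + b) = \<phi> a + \<phi> b) \<and>
     (\<forall>a b. \<phi> (a * b) = \<phi> a * \<phi> b) \<and>
     (\<forall>a x. \<phi> a * x = x * \<phi> a)"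

definition alg_eval :: "('f::field \<Rightarrow> 'r::ring_1) \<Rightarrow> 'f poly \<Rightarrow> 'r \<Rightarrow> 'r" where
  "alg_eval \<phi> p x = (\<Sum>i\<le>degree p. \<phi> (coeff p i) * x ^ i)"

end

theory Submission
  imports Defs "HOL-Computational_Algebra.Primes" "HOL-Library.FuncSet"
begin

definition prim :: "nat \<Rightarrow> complex set" where
  "prim k = {z. z ^ k = 1 \<and> (\<forall>j. 0 < j \<and> j < k \<longrightarrow> z ^ j \<noteq> 1)}"

definition cyc :: "nat \<Rightarrow> complex poly" where
  "cyc k = (\<Prod>z\<in>prim k. [:-z, 1:])"

lemma finite_prim: "k > 0 \<Longrightarrow> finite (prim k)"
  by (rule finite_subset[OF _ finite_roots_unity[of k]]) (auto simp: prim_def)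

lemma roots_partition:
  assumes "k > 0"
  shows "{z::complex. z ^ k = 1} = (\<Union>d\<in>{d. d dvd k}. prim d)"
proof
  show "{z::complex. z ^ k = 1} \<subseteq> (\<Union>d\<in>{d. d dvd k}. prim d)"
  proof
    fix z :: complex assume "z \<in> {z. z ^ k = 1}"
    hence zk: "z ^ k = 1" by simp
    define d where "d = (LEAST d. d > 0 \<and> z ^ d = 1)"
    have dP: "d > 0 \<and> z ^ d = 1" unfolding d_def by (rule LeastI[of _ k]) (use assms zk in auto)
    have dmin: "\<And>j. 0 < j \<Longrightarrow> j < d \<Longrightarrow> z ^ j \<noteq> 1"
      using not_less_Least d_def by blast
    have "z ^ (k mod d) = 1"
    proof -
      have "k = d * (k div d) + k mod d" by simp
      hence "z ^ k = (z ^ d) ^ (k div d) * z ^ (k mod d)"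
        by (metis power_add power_mult)
      thus ?thesis using zk dP by simp
    qed
    hence "k mod d = 0" using dmin[of "k mod d"] dP by (meson mod_less_divisor neq0_conv)
    hence "d dvd k" by auto
    moreover have "z \<in> prim d" using dP dmin by (auto simp: prim_def)
    ultimately show "z \<in> (\<Union>d\<in>{d. d dvd k}. prim d)" by auto
  qed
next
  show "(\<Union>d\<in>{d. d dvd k}. prim d) \<subseteq> {z::complex. z ^ k = 1}"
  proof
    fix z assume "z \<in> (\<Union>d\<in>{d. d dvd k}. prim d)"
    then obtain d where "d dvd k" "z \<in> prim d" by auto
    then obtain e where "k = d * e" "z ^ d = 1" by (auto simp: prim_def)
    thus "z \<in> {z. z ^ k = 1}" by (simp add: power_mult)
  qed
qed

lemma prim_disjoint:
  assumes "d > 0" "d' > 0" "d \<noteq> d'"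
  shows "prim d \<inter> prim d' = {}"
proof (rule ccontr)
  assume "prim d \<inter> prim d' \<noteq> {}"
  then obtain z where z: "z \<in> prim d" "z \<in> prim d'" by auto
  show False
  proof (cases "d < d'")
    case True thus False using z assms by (auto simp: prim_def)
  next
    case False hence "d' < d" using assms by auto
    thus False using z assms by (auto simp: prim_def)
  qed
qed

lemma prod_linear_dvd:
  fixes f :: "complex poly"
  assumes "finite A" "\<And>z. z \<in> A \<Longrightarrow> poly f z = 0"
  shows "(\<Prod>z\<in>A. [:-z, 1:]) dvd f"
  using assms
proof (induction A rule: finite_induct)
  case empty thus ?case by simp
next
  case (insert a A)
  have "(\<Prod>z\<in>A. [:-z, 1:]) dvd f" using insert by auto
  then obtain g where g: "f = (\<Prod>z\<in>A. [:-z, 1:]) * g" by (auto elim: dvdE)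
  have "poly (\<Prod>z\<in>A. [:-z, 1:]) a \<noteq> 0"
    using insert(2) by (auto simp: poly_prod insert(1))
  moreover have "poly f a = 0" using insert by auto
  ultimately have "poly g a = 0" using g by simp
  hence "[:-a, 1:] dvd g" by (simp add: poly_eq_0_iff_dvd)
  hence "(\<Prod>z\<in>A. [:-z, 1:]) * [:-a, 1:] dvd f"
    using g by (metis dvd_refl mult_dvd_mono)
  thus ?case using insert(1,2) by (simp add: mult.commute)
qed

lemma xk_factor:
  assumes "k > 0"
  shows "(monom 1 k - 1 :: complex poly) = (\<Prod>z\<in>{z. z ^ k = 1}. [:-z, 1:])"
proof -
  let ?P = "\<Prod>z\<in>{z::complex. z ^ k = 1}. [:-z, 1:]"
  let ?f = "monom 1 k - 1 :: complex poly"
  have fin: "finite {z::complex. z ^ k = 1}" using finite_roots_unity assms by auto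
  have "?P dvd ?f"
    by (rule prod_linear_dvd[OF fin]) (auto simp: poly_monom)
  then obtain c where c: "?f = ?P * c" by (auto elim: dvdE)
  have degP: "degree ?P = k"
    using card_roots_unity_eq[OF assms] by (subst degree_prod_eq_sum_degree) auto
  have lcP: "lead_coeff ?P = 1" by (simp add: lead_coeff_prod)
  have degf: "degree ?f = k"
  proof -
    have "?f = monom 1 k + (- 1)" by simp
    also have "degree \<dots> = degree (monom 1 k :: complex poly)"
      by (rule degree_add_eq_left) (use assms in \<open>simp add: degree_monom_eq\<close>)
    finally show ?thesis by (simp add: degree_monom_eq)
  qed
  have lcf: "lead_coeff ?f = 1" using assms degf
    by (simp add: coeff_monom)
  have "?f \<noteq> 0" using degf assms by auto
  hence "c \<noteq> 0" "?P \<noteq> 0" using c by auto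
  hence "degree ?f = degree ?P + degree c" using c degree_mult_eq by metis
  hence "degree c = 0" using degP degf by simp
  moreover have "lead_coeff ?f = lead_coeff ?P * lead_coeff c" using c lead_coeff_mult by metis
  ultimately have "c = 1" using lcP lcf by (metis degree_0_id mult_1 one_pCons)
  thus ?thesis using c by simp
qed

lemma xk_cyc:
  assumes "k > 0"
  shows "(monom 1 k - 1 :: complex poly) = (\<Prod>d\<in>{d. d dvd k}. cyc d)"
proof -
  have fd: "finite {d. d dvd k}" using assms by simp
  have "(monom 1 k - 1 :: complex poly) = (\<Prod>z\<in>(\<Union>d\<in>{d. d dvd k}. prim d). [:-z, 1:])"
    using xk_factor[OF assms] roots_partition[OF assms] by simp
  also have "\<dots> = (\<Prod>d\<in>{d. d dvd k}. \<Prod>z\<in>prim d. [:-z, 1:])"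
  proof (rule prod.UNION_disjoint[OF fd])
    show "\<forall>d\<in>{d. d dvd k}. finite (prim d)"
      using assms by (auto intro!: finite_prim dest: dvd_pos_nat)
    show "\<forall>d\<in>{d. d dvd k}. \<forall>d'\<in>{d. d dvd k}. d \<noteq> d' \<longrightarrow> prim d \<inter> prim d' = {}"
      using assms prim_disjoint dvd_pos_nat by (metis mem_Collect_eq)
  qed
  finally show ?thesis by (simp add: cyc_def)
qed

abbreviation ci :: "int poly \<Rightarrow> complex poly" where "ci \<equiv> map_poly of_int"

lemma ci_mult: "ci (p * q) = ci p * ci q"
  by (intro poly_eqI) (simp add: coeff_map_poly coeff_mult)

lemma ci_add: "ci (p + q) = ci p + ci q"
  by (intro poly_eqI) (simp add: coeff_map_poly)

lemma ci_prod: "ci (prod f A) = (\<Prod>x\<in>A. ci (f x))"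
  by (induction A rule: infinite_finite_induct) (auto simp: ci_mult)

lemma ci_poly: "poly (ci p) (of_int x) = of_int (poly p x)"
  by (induction p) (auto simp: map_poly_pCons)

lemma ci_inj: "ci p = ci q \<Longrightarrow> p = q"
  by (metis (no_types, lifting) coeff_map_poly of_int_0 of_int_eq_iff poly_eqI)

lemma ci_degree: "degree (ci p) = degree p"
  by (rule degree_map_poly) auto

lemma ci_eq0: "ci p = 0 \<longleftrightarrow> p = 0"
  by (metis ci_inj map_poly_0)

lemma cyc_monic: "lead_coeff (cyc k) = 1"
  by (simp add: cyc_def lead_coeff_prod)

lemma cyc_int: "k > 0 \<Longrightarrow> \<exists>P. ci P = cyc k"
proof (induction k rule: less_induct)
  case (less k)
  define D where "D = {d. d dvd k \<and> d < k}"
  have finD: "finite D" using less.prems by (auto simp: D_def)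
  have "\<forall>d\<in>D. \<exists>P. ci P = cyc d"
    using less by (auto simp: D_def dest: dvd_pos_nat)
  then obtain f where f: "\<And>d. d \<in> D \<Longrightarrow> ci (f d) = cyc d" by metis
  define Ai where "Ai = (\<Prod>d\<in>D. f d)"
  define A where "A = (\<Prod>d\<in>D. cyc d)"
  have AAi: "ci Ai = A" unfolding Ai_def A_def ci_prod by (rule prod.cong) (auto simp: f)
  have "{d. d dvd k} = insert k D"
    using less.prems by (auto simp: D_def dest: dvd_imp_le)
  hence B: "monom 1 k - 1 = cyc k * A"
    using xk_cyc[OF less.prems] finD by (simp add: A_def D_def)
  have lcA: "lead_coeff A = 1" by (simp add: A_def lead_coeff_prod cyc_monic)
  hence A0: "A \<noteq> 0" by auto
  have lcAi: "lead_coeff Ai = 1"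
  proof -
    have "of_int (lead_coeff Ai) = (lead_coeff A :: complex)"
      using AAi ci_degree by (metis coeff_map_poly of_int_0)
    thus ?thesis using lcA by simp
  qed
  hence Ai0: "Ai \<noteq> 0" by auto
  obtain Q R where QR: "pseudo_divmod (monom 1 k - 1) Ai = (Q, R)" by (metis surj_pair)
  from pseudo_divmod(1)[OF Ai0 QR] lcAi have eq: "monom 1 k - 1 = Ai * Q + R" by simp
  from pseudo_divmod(2)[OF Ai0 QR] have R: "R = 0 \<or> degree R < degree Ai" .
  have "ci (monom 1 k - 1) = monom 1 k - 1"
    by (intro poly_eqI) (simp add: coeff_map_poly coeff_monom of_int_poly)
  hence "cyc k * A = A * ci Q + ci R" using eq B AAi by (metis ci_add ci_mult)
  hence E: "A * (cyc k - ci Q) = ci R" by (simp add: algebra_simps)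
  have "cyc k = ci Q"
  proof (rule ccontr)
    assume ne: "cyc k \<noteq> ci Q"
    hence "degree (ci R) = degree A + degree (cyc k - ci Q)"
      using E A0 by (metis degree_mult_eq right_minus_eq)
    moreover have "ci R \<noteq> 0" using E ne A0 by auto
    ultimately show False using R ci_degree AAi ci_eq0 by (metis not_add_less1)
  qed
  thus ?case by metis
qed

definition cv :: "int \<Rightarrow> nat \<Rightarrow> int" where
  "cv q d = poly (SOME P. ci P = cyc d) q"

lemma cv_complex: "d > 0 \<Longrightarrow> of_int (cv q d) = poly (cyc d) (of_int q)"
  unfolding cv_def using someI_ex[OF cyc_int[of d]] ci_poly by metis

lemma cv_prod:
  assumes "k > 0"
  shows "q ^ k - 1 = (\<Prod>d\<in>{d. d dvd k}. cv q d)"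
proof -
  have "(of_int (q ^ k - 1) :: complex) = poly (monom 1 k - 1) (of_int q)"
    by (simp add: poly_monom)
  also have "\<dots> = (\<Prod>d\<in>{d. d dvd k}. poly (cyc d) (of_int q))"
    by (simp add: xk_cyc[OF assms] poly_prod)
  also have "\<dots> = (\<Prod>d\<in>{d. d dvd k}. of_int (cv q d))"
    by (rule prod.cong) (use assms cv_complex in \<open>auto dest: dvd_pos_nat\<close>)
  finally show ?thesis by (metis of_int_eq_iff of_int_prod)
qed

lemma prim_nonempty:
  assumes "n > 0" shows "prim n \<noteq> {}"
proof -
  define w where "w = cis (2 * pi / real n)"
  have pw: "w ^ j = cis (2 * pi * real j / real n)" for j
    by (simp add: w_def DeMoivre mult.commute)
  have inj: "inj_on (\<lambda>k. cis (2 * pi * real k / real n)) {..<n}"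
    using bij_betw_roots_unity[OF assms] by (simp add: bij_betw_def)
  have "w ^ n = 1" using pw[of n] assms by simp
  moreover have "w ^ j \<noteq> 1" if "0 < j" "j < n" for j
  proof
    assume "w ^ j = 1"
    hence "(\<lambda>k. cis (2 * pi * real k / real n)) j = (\<lambda>k. cis (2 * pi * real k / real n)) 0"
      using pw by simp
    hence "j = 0" using inj_onD[OF inj] that assms by blast
    thus False using that by simp
  qed
  ultimately have "w \<in> prim n" by (auto simp: prim_def)
  thus ?thesis by auto
qed

lemma dist_bound:
  fixes z :: complex and q :: real
  assumes "norm z = 1" "z \<noteq> 1" "q > 0"
  shows "norm (of_real q - z) > q - 1"
proof -
  have h: "(Re z)\<^sup>2 + (Im z)\<^sup>2 = 1" using assms cmod_power2[of z] by simp
  have "Re z < 1"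
  proof (rule ccontr)
    assume "\<not> Re z < 1"
    moreover have "Re z \<le> 1"
    proof -
      have "(Re z)\<^sup>2 \<le> 1" using h zero_le_power2[of "Im z"] by linarith
      hence "(Re z)\<^sup>2 \<le> 1\<^sup>2" by simp
      hence "\<bar>Re z\<bar> \<le> \<bar>1\<bar>" using abs_le_square_iff by blast
      thus ?thesis by simp
    qed
    ultimately have "Re z = 1" by simp
    hence "Im z = 0" using h by simp
    hence "z = 1" using \<open>Re z = 1\<close> by (simp add: complex_eq_iff)
    thus False using assms by simp
  qed
  have "(norm (of_real q - z))\<^sup>2 = (q - Re z)\<^sup>2 + (Im z)\<^sup>2"
    by (simp add: cmod_power2)
  also have "\<dots> = q\<^sup>2 - 2 * q * Re z + 1" using h by (simp add: power2_eq_square algebra_simps)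
  also have "\<dots> > (q - 1)\<^sup>2" using \<open>Re z < 1\<close> assms(3) by (simp add: power2_eq_square algebra_simps)
  finally have "(q - 1)\<^sup>2 < (norm (of_real q - z))\<^sup>2" .
  thus ?thesis using power2_less_imp_less[OF _ norm_ge_zero] by blast
qed

lemma prod_gt:
  fixes g :: "'a \<Rightarrow> real"
  assumes "finite A" "A \<noteq> {}" "\<And>x. x \<in> A \<Longrightarrow> g x > c" "c \<ge> 1"
  shows "(\<Prod>x\<in>A. g x) > c"
proof -
  obtain a where a: "a \<in> A" using assms by auto
  have "(\<Prod>x\<in>A. g x) = g a * (\<Prod>x\<in>A - {a}. g x)" using prod.remove[OF assms(1) a] by simp
  moreover have "(\<Prod>x\<in>A - {a}. g x) \<ge> 1"
    by (rule prod_ge_1) (use assms in \<open>auto intro: less_imp_le order.trans[of 1 c]\<close>)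
  moreover have "g a > c" using assms a by auto
  ultimately show ?thesis using assms(4)
    by (smt (verit) mult_le_cancel_left1)
qed

lemma cv_bound:
  assumes "n \<ge> 2" "q \<ge> 2"
  shows "\<bar>cv q n\<bar> > q - 1"
proof -
  have n0: "n > 0" using assms by simp
  have "\<bar>cv q n\<bar> = norm (of_int (cv q n) :: complex)" by simp
  also have "\<dots> = norm (poly (cyc n) (of_int q))" using cv_complex[OF n0] by simp
  also have "\<dots> = (\<Prod>z\<in>prim n. norm (of_real (of_int q) - z))"
    by (simp add: cyc_def poly_prod prod_norm)
  finally have e: "real_of_int \<bar>cv q n\<bar> = (\<Prod>z\<in>prim n. norm (of_real (of_int q) - z))" .
  have "(\<Prod>z\<in>prim n. norm (of_real (of_int q) - z)) > real_of_int q - 1"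
  proof (rule prod_gt[OF finite_prim[OF n0] prim_nonempty[OF n0]])
    fix z assume z: "z \<in> prim n"
    hence zn: "z ^ n = 1" by (simp add: prim_def)
    have "z \<noteq> 1" using z assms by (auto simp: prim_def)
    moreover have "norm z = 1"
    proof -
      have "norm z ^ n = 1 ^ n" using zn by (metis norm_one norm_power power_one)
      thus ?thesis using n0 by (metis norm_ge_zero power_eq_imp_eq_base zero_le_one)
    qed
    ultimately show "norm (of_real (of_int q) - z) > real_of_int q - 1"
      using dist_bound[of z "real_of_int q"] assms by simp
  qed (use assms in simp)
  thus ?thesis using e by linarith
qed

lemma cyclo_main:
  assumes "n \<ge> 2" "q \<ge> 2"
  shows "\<exists>c::int. \<bar>c\<bar> > q - 1 \<and>
           (\<forall>d. d dvd n \<and> d < n \<longrightarrow> (\<exists>W. q ^ n - 1 = (q ^ d - 1) * c * W))"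
proof (rule exI[of _ "cv q n"], intro conjI allI impI)
  show "\<bar>cv q n\<bar> > q - 1" by (rule cv_bound[OF assms])
  fix d assume d: "d dvd n \<and> d < n"
  have n0: "n > 0" using assms by simp
  hence d0: "d > 0" using d by (auto dest: dvd_pos_nat)
  define Rs where "Rs = {e. e dvd n \<and> \<not> e dvd d \<and> e \<noteq> n}"
  have split: "{e. e dvd n} = insert n ({e. e dvd d} \<union> Rs)"
    using d by (auto simp: Rs_def intro: dvd_trans)
  have fin1: "finite {e. e dvd d}" using d0 by simp
  have fin2: "finite Rs" using n0 by (auto simp: Rs_def)
  have nn: "n \<notin> {e. e dvd d} \<union> Rs" using d d0 by (auto simp: Rs_def dest: dvd_imp_le)
  have dj: "{e. e dvd d} \<inter> Rs = {}" by (auto simp: Rs_def)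
  have "q ^ n - 1 = (\<Prod>e\<in>{e. e dvd n}. cv q e)" by (rule cv_prod[OF n0])
  also have "\<dots> = cv q n * ((\<Prod>e\<in>{e. e dvd d}. cv q e) * (\<Prod>e\<in>Rs. cv q e))"
    unfolding split using fin1 fin2 nn dj by (simp add: prod.union_disjoint)
  also have "(\<Prod>e\<in>{e. e dvd d}. cv q e) = q ^ d - 1" by (rule cv_prod[OF d0, symmetric])
  finally show "\<exists>W. q ^ n - 1 = (q ^ d - 1) * cv q n * W" by (intro exI[of _ "\<Prod>e\<in>Rs. cv q e"]) (simp add: mult_ac)
qed

definition sdr :: "'a::division_ring set \<Rightarrow> bool" where
  "sdr S \<longleftrightarrow> 0 \<in> S \<and> 1 \<in> S \<and> (\<forall>x\<in>S. \<forall>y\<in>S. x + y \<in> S \<and> x * y \<in> S) \<and>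
     (\<forall>x\<in>S. - x \<in> S) \<and> (\<forall>x\<in>S. x \<noteq> 0 \<longrightarrow> inverse x \<in> S)"

lemma sdrD:
  assumes "sdr S"
  shows "0 \<in> S" "1 \<in> S" "x \<in> S \<Longrightarrow> y \<in> S \<Longrightarrow> x + y \<in> S"
    "x \<in> S \<Longrightarrow> y \<in> S \<Longrightarrow> x * y \<in> S" "x \<in> S \<Longrightarrow> - x \<in> S"
    "x \<in> S \<Longrightarrow> x \<noteq> 0 \<Longrightarrow> inverse x \<in> S"
  using assms by (auto simp: sdr_def)

lemma sdr_diff: "sdr S \<Longrightarrow> x \<in> S \<Longrightarrow> y \<in> S \<Longrightarrow> x - y \<in> S"
  using sdrD(3,5) by (metis diff_conv_add_uminus)

lemma comm_inverse:
  fixes a b :: "'a::division_ring"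
  assumes "a * b = b * a"
  shows "inverse a * b = b * inverse a"
proof (cases "a = 0")
  case False
  have "inverse a * b = inverse a * (b * a) * inverse a" using False by (simp add: mult.assoc)
  also have "\<dots> = inverse a * (a * b) * inverse a" using assms by simp
  also have "\<dots> = b * inverse a" using False by (simp add: mult.assoc[symmetric])
  finally show ?thesis .
qed simp

subsection \<open>Counting elements of modules\<close>

lemma card_module_aux:
  fixes K V :: "'a::division_ring set"
  assumes K: "sdr K" "finite K" and V: "finite V" "\<forall>k\<in>K. \<forall>v\<in>V. k * v \<in> V"
    "\<forall>x\<in>V. \<forall>y\<in>V. x + y \<in> V"
  shows "W \<subseteq> V \<Longrightarrow> 0 \<in> W \<Longrightarrow> (\<forall>x\<in>W. \<forall>y\<in>W. x + y \<in> W) \<Longrightarrow> (\<forall>k\<in>K. \<forall>w\<in>W. k * w \<in> W)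
     \<Longrightarrow> \<exists>m. card V = card W * card K ^ m"
proof (induction "card V - card W" arbitrary: W rule: less_induct)
  case less
  show ?case
  proof (cases "W = V")
    case True thus ?thesis by (intro exI[of _ 0]) simp
  next
    case False
    then obtain v where v: "v \<in> V" "v \<notin> W" using less.prems(1) by auto
    define W' where "W' = (\<lambda>(k, w). k * v + w) ` (K \<times> W)"
    have finW: "finite W" using less.prems(1) V(1) finite_subset by auto
    have m1: "- 1 \<in> K" using sdrD[OF K(1)] by auto
    have Wdiff: "w2 - w1 \<in> W" if "w1 \<in> W" "w2 \<in> W" for w1 w2
    proof -
      have "(- 1) * w1 \<in> W" using less.prems(4) m1 that by auto
      hence "w2 + (- 1) * w1 \<in> W" using less.prems(3) that by auto
      thus ?thesis by simp
    qed
    have inj: "inj_on (\<lambda>(k, w). k * v + w) (K \<times> W)"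
    proof (rule inj_onI, clarsimp)
      fix k1 w1 k2 w2 assume h: "k1 \<in> K" "w1 \<in> W" "k2 \<in> K" "w2 \<in> W" "k1 * v + w1 = k2 * v + w2"
      have e: "(k1 - k2) * v = w2 - w1" using h(5) by (simp add: algebra_simps)
      show "k1 = k2 \<and> w1 = w2"
      proof (cases "k1 = k2")
        case True thus ?thesis using h(5) by simp
      next
        case False
        have kk: "k1 - k2 \<in> K" using sdr_diff[OF K(1)] h by auto
        hence "inverse (k1 - k2) \<in> K" using sdrD(6)[OF K(1)] False by auto
        hence "inverse (k1 - k2) * (w2 - w1) \<in> W" using less.prems(4) Wdiff h by auto
        moreover have "inverse (k1 - k2) * (w2 - w1) = v" using e False
          by (metis divide_inverse nonzero_eq_divide_eq right_minus_eq mult.assoc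
              left_inverse mult_1)
        ultimately show ?thesis using v by auto
      qed
    qed
    have cW': "card W' = card K * card W"
      unfolding W'_def using card_image[OF inj] card_cartesian_product by metis
    have W'V: "W' \<subseteq> V" unfolding W'_def using V(2,3) v less.prems(1) by auto
    have WW': "W \<subseteq> W'" unfolding W'_def
    proof
      fix w assume "w \<in> W"
      hence "(0, w) \<in> K \<times> W" using sdrD(1)[OF K(1)] by auto
      thus "w \<in> (\<lambda>(k, w). k * v + w) ` (K \<times> W)" by force
    qed
    have vW': "v \<in> W'" unfolding W'_def
    proof -
      have "(1, 0) \<in> K \<times> W" using sdrD(2)[OF K(1)] less.prems(2) by auto
      thus "v \<in> (\<lambda>(k, w). k * v + w) ` (K \<times> W)" by force
    qed
    have W'0: "0 \<in> W'" using WW' less.prems(2) by auto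
    have W'add: "\<forall>x\<in>W'. \<forall>y\<in>W'. x + y \<in> W'"
    proof (intro ballI)
      fix x y assume "x \<in> W'" "y \<in> W'"
      then obtain k1 w1 k2 w2 where h: "k1 \<in> K" "w1 \<in> W" "k2 \<in> K" "w2 \<in> W"
        "x = k1 * v + w1" "y = k2 * v + w2" unfolding W'_def by auto
      have "x + y = (k1 + k2) * v + (w1 + w2)" using h by (simp add: algebra_simps)
      moreover have "(k1 + k2, w1 + w2) \<in> K \<times> W" using h sdrD(3)[OF K(1)] less.prems(3) by auto
      ultimately show "x + y \<in> W'" unfolding W'_def by force
    qed
    have W'mul: "\<forall>k\<in>K. \<forall>w\<in>W'. k * w \<in> W'"
    proof (intro ballI)
      fix k x assume "k \<in> K" "x \<in> W'"
      then obtain k1 w1 where h: "k1 \<in> K" "w1 \<in> W" "x = k1 * v + w1" unfolding W'_def by auto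
      have "k * x = (k * k1) * v + k * w1" using h by (simp add: algebra_simps)
      moreover have "(k * k1, k * w1) \<in> K \<times> W" using h \<open>k \<in> K\<close> sdrD(4)[OF K(1)] less.prems(4) by auto
      ultimately show "k * x \<in> W'" unfolding W'_def by force
    qed
    have "card W < card W'"
      using WW' vW' v(2) V(1) W'V by (metis finite_subset psubsetI psubset_card_mono)
    moreover have "card W' \<le> card V" using W'V V(1) by (simp add: card_mono)
    ultimately have "card V - card W' < card V - card W" by simp
    then obtain m where "card V = card W' * card K ^ m"
      using less.hyps[OF _ W'V W'0 W'add W'mul] by blast
    hence "card V = card W * card K ^ Suc m" using cW' by simp
    thus ?thesis by blast
  qed
qed

lemma card_module:
  fixes K V :: "'a::division_ring set"
  assumes "sdr K" "finite K" "finite V" "0 \<in> V" "\<forall>k\<in>K. \<forall>v\<in>V. k * v \<in> V"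
    "\<forall>x\<in>V. \<forall>y\<in>V. x + y \<in> V"
  shows "\<exists>m. card V = card K ^ m"
  using card_module_aux[OF assms(1,2,3,5,6), of "{0}"] assms(4) by auto

lemma cent_sdr:
  fixes S T :: "'a::division_ring set"
  assumes "sdr S"
  shows "sdr {s\<in>S. \<forall>t\<in>T. s * t = t * s}"
  unfolding sdr_def
proof (intro conjI ballI impI)
  show "0 \<in> {s \<in> S. \<forall>t\<in>T. s * t = t * s}" "1 \<in> {s \<in> S. \<forall>t\<in>T. s * t = t * s}"
    using sdrD[OF assms] by auto
  fix x y assume x: "x \<in> {s \<in> S. \<forall>t\<in>T. s * t = t * s}" and y: "y \<in> {s \<in> S. \<forall>t\<in>T. s * t = t * s}"
  show "x + y \<in> {s \<in> S. \<forall>t\<in>T. s * t = t * s}"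
    using x y sdrD[OF assms] by (auto simp: algebra_simps)
  show "x * y \<in> {s \<in> S. \<forall>t\<in>T. s * t = t * s}"
    using x y sdrD[OF assms] by (auto simp: mult.assoc) (metis mult.assoc)
next
  fix x assume x: "x \<in> {s \<in> S. \<forall>t\<in>T. s * t = t * s}"
  show "- x \<in> {s \<in> S. \<forall>t\<in>T. s * t = t * s}" using x sdrD[OF assms] by auto
  assume "x \<noteq> 0"
  moreover have "\<forall>t\<in>T. inverse x * t = t * inverse x" using x comm_inverse by blast
  ultimately show "inverse x \<in> {s \<in> S. \<forall>t\<in>T. s * t = t * s}" using x sdrD(6)[OF assms] by auto
qed

lemma sdr_pow: "sdr S \<Longrightarrow> x \<in> S \<Longrightarrow> x ^ k \<in> S"
  by (induction k) (auto simp: sdrD)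

lemma conj_in:
  fixes S :: "'a::division_ring set"
  assumes "sdr S" "u \<in> S" "u \<noteq> 0" "x \<in> S"
  shows "u * x * inverse u \<in> S" "x \<noteq> 0 \<Longrightarrow> u * x * inverse u \<noteq> 0"
  using assms sdrD[OF assms(1)] by auto

lemma conj_conj:
  fixes u v x :: "'a::division_ring"
  assumes "u \<noteq> 0" "v \<noteq> 0"
  shows "u * (v * x * inverse v) * inverse u = (u * v) * x * inverse (u * v)"
  using assms by (simp add: nonzero_inverse_mult_distrib mult.assoc)

lemma orbit_stab:
  fixes S :: "'a::division_ring set"
  assumes S: "sdr S" "finite S" and x: "x \<in> S"
  defines "G \<equiv> S - {0}"
  shows "card G = card ((\<lambda>u. u * x * inverse u) ` G) * card ({s\<in>S. \<forall>t\<in>{x}. s * t = t * s} - {0})"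
proof -
  define C where "C = {s\<in>S. \<forall>t\<in>{x}. s * t = t * s} - {0}"
  define cl where "cl = (\<lambda>u. u * x * inverse u) ` G"
  define F where "F c = {u\<in>G. u * x * inverse u = c}" for c
  have finG: "finite G" using S(2) by (simp add: G_def)
  have fincl: "finite cl" using finG by (simp add: cl_def)
  have GU: "G = (\<Union>c\<in>cl. F c)" by (auto simp: F_def cl_def)
  have Fc: "card (F c) = card C" if c: "c \<in> cl" for c
  proof -
    obtain u0 where u0: "u0 \<in> G" "c = u0 * x * inverse u0" using c by (auto simp: cl_def)
    have u00: "u0 \<noteq> 0" "u0 \<in> S" using u0 by (auto simp: G_def)
    have "F c = (\<lambda>t. u0 * t) ` C"
    proof
      show "F c \<subseteq> (\<lambda>t. u0 * t) ` C"
      proof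
        fix u assume u: "u \<in> F c"
        hence uG: "u \<in> S" "u \<noteq> 0" and ux: "u * x * inverse u = u0 * x * inverse u0"
          using u0 by (auto simp: F_def G_def)
        define t where "t = inverse u0 * u"
        have tS: "t \<in> S" using sdrD[OF S(1)] u00 uG by (auto simp: t_def)
        have t0: "t \<noteq> 0" using u00 uG by (simp add: t_def)
        have "t * x = inverse u0 * (u * x * inverse u) * u" using uG by (simp add: t_def mult.assoc)
        also have "\<dots> = inverse u0 * (u0 * x * inverse u0) * u" using ux by simp
        also have "\<dots> = x * t" using u00 by (simp add: t_def mult.assoc[symmetric])
        finally have "t * x = x * t" .
        moreover have "u = u0 * t" using u00 by (simp add: t_def mult.assoc[symmetric])
        ultimately show "u \<in> (\<lambda>t. u0 * t) ` C" using tS t0 by (auto simp: C_def)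
      qed
    next
      show "(\<lambda>t. u0 * t) ` C \<subseteq> F c"
      proof
        fix u assume "u \<in> (\<lambda>t. u0 * t) ` C"
        then obtain t where t: "t \<in> S" "t \<noteq> 0" "t * x = x * t" "u = u0 * t" by (auto simp: C_def)
        have "u \<in> G" using t u00 sdrD(4)[OF S(1)] by (auto simp: G_def)
        moreover have "u * x * inverse u = u0 * x * inverse u0"
        proof -
          have iu: "inverse (u0 * t) = inverse t * inverse u0"
            using t u00 by (intro nonzero_inverse_mult_distrib) auto
          have "u * x * inverse u = u0 * (t * x) * inverse t * inverse u0"
            unfolding t(4) iu by (simp only: mult.assoc)
          also have "\<dots> = u0 * x * (t * inverse t) * inverse u0" using t(3) by (simp add: mult.assoc)
          also have "\<dots> = u0 * x * inverse u0" using t(2) by simp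
          finally show ?thesis .
        qed
        ultimately show "u \<in> F c" using u0 by (simp add: F_def)
      qed
    qed
    moreover have "inj_on (\<lambda>t. u0 * t) C" using u00 by (auto intro: inj_onI)
    ultimately show ?thesis by (simp add: card_image)
  qed
  have "card G = (\<Sum>c\<in>cl. card (F c))"
    unfolding GU by (rule card_UN_disjoint[OF fincl]) (use finG in \<open>auto simp: F_def\<close>)
  also have "\<dots> = card cl * card C" using Fc by simp
  finally show ?thesis by (simp add: cl_def C_def)
qed

theorem wedderburn:
  fixes S :: "'a::division_ring set"
  assumes S: "sdr S" "finite S"
  shows "\<forall>x\<in>S. \<forall>y\<in>S. x * y = y * x"
proof (rule ccontr)
  assume nc: "\<not> (\<forall>x\<in>S. \<forall>y\<in>S. x * y = y * x)"
  define Z where "Z = {s\<in>S. \<forall>t\<in>S. s * t = t * s}"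
  define C where "C x = {s\<in>S. \<forall>t\<in>{x}. s * t = t * s}" for x
  define G where "G = S - {0}"
  define cl where "cl x = (\<lambda>u. u * x * inverse u) ` G" for x
  have sZ: "sdr Z" unfolding Z_def by (rule cent_sdr[OF S(1)])
  have sC: "sdr (C x)" for x unfolding C_def by (rule cent_sdr[OF S(1)])
  have ZS: "Z \<subseteq> S" by (auto simp: Z_def)
  have CS: "C x \<subseteq> S" for x by (auto simp: C_def)
  have finZ: "finite Z" using finite_subset[OF ZS S(2)] .
  have finC: "finite (C x)" for x using finite_subset[OF CS S(2)] .
  have finG: "finite G" using S(2) by (simp add: G_def)
  define q where "q = card Z"
  have q2: "q \<ge> 2"
  proof -
    have "{0, 1} \<subseteq> Z" using sdrD(1,2)[OF sZ] by auto
    hence "card {0, 1::'a} \<le> q" unfolding q_def using finZ card_mono by blast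
    thus ?thesis by simp
  qed
  have addS: "\<forall>x\<in>S. \<forall>y\<in>S. x + y \<in> S" using sdrD(3)[OF S(1)] by auto
  obtain n where n: "card S = q ^ n"
  proof -
    have "\<forall>k\<in>Z. \<forall>v\<in>S. k * v \<in> S" using ZS sdrD(4)[OF S(1)] by auto
    thus ?thesis using card_module[OF sZ finZ S(2) sdrD(1)[OF S(1)] _ addS] that
      unfolding q_def by blast
  qed
  have dm: "\<exists>d. card (C x) = q ^ d \<and> d dvd n" if x: "x \<in> S" for x
  proof -
    have "\<forall>k\<in>Z. \<forall>v\<in>C x. k * v \<in> C x"
    proof (intro ballI)
      fix k v assume k: "k \<in> Z" and v: "v \<in> C x"
      have "k * v * x = x * (k * v)"
      proof -
        have "k * v * x = k * (x * v)" using v by (simp add: C_def mult.assoc)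
        also have "\<dots> = x * (k * v)" using k x by (simp add: Z_def mult.assoc[symmetric])
        finally show ?thesis .
      qed
      thus "k * v \<in> C x" using k v ZS sdrD(4)[OF S(1)] by (auto simp: C_def)
    qed
    moreover have "\<forall>a\<in>C x. \<forall>b\<in>C x. a + b \<in> C x" using sdrD(3)[OF sC] by auto
    ultimately obtain d where d: "card (C x) = q ^ d"
      using card_module[OF sZ finZ finC sdrD(1)[OF sC]] unfolding q_def by blast
    have "\<forall>k\<in>C x. \<forall>v\<in>S. k * v \<in> S" using CS sdrD(4)[OF S(1)] by blast
    then obtain m where m: "card S = card (C x) ^ m"
      using card_module[OF sC finC S(2) sdrD(1)[OF S(1)] _ addS] by blast
    have "q ^ n = q ^ (d * m)" using n m d by (simp add: power_mult)
    hence "n = d * m" using q2 power_inject_exp[of q n "d * m"] by simp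
    thus ?thesis using d by auto
  qed
  obtain x0 y0 where xy0: "x0 \<in> S" "y0 \<in> S" "x0 * y0 \<noteq> y0 * x0" using nc by auto
  have n2: "n \<ge> 2"
  proof -
    have "x0 \<notin> Z" using xy0 by (auto simp: Z_def)
    hence "Z \<subset> S" using ZS xy0 by auto
    hence "q < q ^ n" using psubset_card_mono[OF S(2)] n q_def by simp
    thus ?thesis using q2 by (cases n; cases "n - 1") auto
  qed
  have inG: "u * x * inverse u \<in> G" if "u \<in> G" "x \<in> G" for u x
    using conj_in[OF S(1), of u x] that by (auto simp: G_def)
  have self: "x \<in> cl x" if "x \<in> G" for x
  proof -
    have "1 \<in> G" using sdrD(2)[OF S(1)] by (simp add: G_def)
    moreover have "x = 1 * x * inverse 1" by simp
    ultimately show ?thesis unfolding cl_def by blast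
  qed
  have clG: "cl x \<subseteq> G" if "x \<in> G" for x using inG that by (auto simp: cl_def)
  have trans: "cl y \<subseteq> cl x" if xyh: "x \<in> G" "y \<in> cl x" for x y
  proof
    fix w assume "w \<in> cl y"
    then obtain u where u: "u \<in> G" "w = u * y * inverse u" by (auto simp: cl_def)
    obtain v where v: "v \<in> G" "y = v * x * inverse v" using xyh by (auto simp: cl_def)
    have "w = (u * v) * x * inverse (u * v)"
      using u v conj_conj[of u v x] by (simp add: G_def)
    moreover have "u * v \<in> G" using u v sdrD(4)[OF S(1)] by (auto simp: G_def)
    ultimately show "w \<in> cl x" by (auto simp: cl_def)
  qed
  have sym: "x \<in> cl y" if xyh: "x \<in> G" "y \<in> cl x" for x y
  proof -
    obtain v where v: "v \<in> G" "y = v * x * inverse v" using xyh by (auto simp: cl_def)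
    have "inverse v \<in> G" using v sdrD(6)[OF S(1)] by (auto simp: G_def)
    moreover have "x = inverse v * y * inverse (inverse v)"
    proof -
      have v0: "v \<noteq> 0" using v by (simp add: G_def)
      have "inverse v * y * inverse (inverse v) = (inverse v * v) * x * (inverse v * v)"
        using v by (simp add: mult.assoc)
      thus ?thesis using v0 by simp
    qed
    ultimately show ?thesis unfolding cl_def by (rule rev_image_eqI)
  qed
  have eqcl: "cl x = cl y" if "x \<in> G" "y \<in> G" "cl x \<inter> cl y \<noteq> {}" for x y
  proof -
    obtain z where z: "z \<in> cl x" "z \<in> cl y" using \<open>cl x \<inter> cl y \<noteq> {}\<close> by auto
    have "cl z \<subseteq> cl x" "cl z \<subseteq> cl y" using trans z that by auto
    moreover have "cl x \<subseteq> cl z" using trans[of z x] sym[of x z] z that clG by auto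
    moreover have "cl y \<subseteq> cl z" using trans[of z y] sym[of y z] z that clG by auto
    ultimately show ?thesis by auto
  qed
  have central: "cl z = {z}" if "z \<in> Z" "z \<noteq> 0" for z
  proof -
    have "u * z * inverse u = z" if "u \<in> G" for u
    proof -
      have uz: "u * z = z * u" using that \<open>z \<in> Z\<close> by (simp add: Z_def G_def)
      have "u * z * inverse u = z * (u * inverse u)" by (simp add: uz mult.assoc)
      thus ?thesis using that by (simp add: G_def)
    qed
    moreover have "z \<in> G" using that ZS by (auto simp: G_def)
    ultimately show ?thesis using self[of z] by (auto simp: cl_def)
  qed
  have UG: "\<Union> (cl ` G) = G" using clG self by auto
  have pw: "pairwise disjnt (cl ` G)"
    unfolding pairwise_def disjnt_def using eqcl by auto
  have finK: "\<And>K. K \<in> cl ` G \<Longrightarrow> finite K" using clG finG finite_subset by blast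
  have CE: "card G = sum card (cl ` G)"
    using card_Union_disjoint[OF pw finK] UG by simp
  define A1 where "A1 = cl ` (Z - {0})"
  define A2 where "A2 = cl ` (G - Z)"
  have splitA: "cl ` G = A1 \<union> A2" using ZS by (auto simp: A1_def A2_def G_def)
  have djA: "A1 \<inter> A2 = {}"
  proof (rule ccontr)
    assume "A1 \<inter> A2 \<noteq> {}"
    then obtain z y where zy: "z \<in> Z" "z \<noteq> 0" "y \<in> G" "y \<notin> Z" "cl z = cl y"
      by (auto simp: A1_def A2_def)
    hence "y \<in> {z}" using self central by metis
    thus False using zy by auto
  qed
  have finA: "finite A1" "finite A2" using finG finZ by (auto simp: A1_def A2_def)
  have sA1: "sum card A1 = q - 1"
  proof -
    have "sum card A1 = (\<Sum>K\<in>A1. 1)"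
      by (rule sum.cong) (auto simp: A1_def central)
    also have "\<dots> = card A1" by simp
    also have "card A1 = card (Z - {0})"
    proof -
      have "inj_on cl (Z - {0})" by (rule inj_onI) (use central in auto)
      thus ?thesis by (simp add: A1_def card_image)
    qed
    also have "\<dots> = q - 1" using sdrD(1)[OF sZ] finZ by (simp add: q_def)
    finally show ?thesis .
  qed
  have cardG: "card G = q ^ n - 1" using n sdrD(1)[OF S(1)] S(2) by (simp add: G_def)
  have qn1: "q ^ n \<ge> 1" using q2 by simp
  have sumeq: "int q ^ n - 1 = (int q - 1) + (\<Sum>K\<in>A2. int (card K))"
  proof -
    have "card G = sum card A1 + sum card A2"
      using CE splitA djA finA by (simp add: sum.union_disjoint)
    hence "int (card G) = int (q - 1) + int (sum card A2)" using sA1 by simp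
    moreover have "int (card G) = int q ^ n - 1" using cardG qn1 by (simp add: of_nat_diff)
    moreover have "int (q - 1) = int q - 1" using q2 by simp
    ultimately show ?thesis by (simp add: of_nat_sum)
  qed
  obtain c :: int where c: "\<bar>c\<bar> > int q - 1"
    and cd: "\<And>d. d dvd n \<Longrightarrow> d < n \<Longrightarrow> \<exists>W. int q ^ n - 1 = (int q ^ d - 1) * c * W"
    using cyclo_main[OF n2, of "int q"] q2 by auto
  have c1: "c dvd int q ^ n - 1" using cd[of 1] n2 by (auto simp: dvd_def mult_ac)
  have c2: "c dvd int (card K)" if K: "K \<in> A2" for K
  proof -
    obtain y where y: "y \<in> G" "y \<notin> Z" "K = cl y" using K by (auto simp: A2_def)
    have yS: "y \<in> S" using y by (simp add: G_def)
    obtain d where d: "card (C y) = q ^ d" "d dvd n" using dm[OF yS] by blast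
    have os: "card G = card K * card (C y - {0})"
      using orbit_stab[OF S yS] y by (simp add: G_def cl_def C_def)
    have c0: "0 \<in> C y" using sdrD(1)[OF sC] .
    have cC: "card (C y - {0}) = q ^ d - 1" using d c0 finC by simp
    have "C y \<noteq> S"
    proof
      assume "C y = S"
      hence "\<forall>t\<in>S. y * t = t * y" unfolding C_def by (metis (mono_tags, lifting) mem_Collect_eq singletonI)
      thus False using y yS by (auto simp: Z_def)
    qed
    hence "card (C y) < card S" using CS S(2) by (simp add: psubset_card_mono psubsetI)
    hence "q ^ d < q ^ n" using d n by simp
    hence dn: "d < n" using q2 power_strict_increasing_iff[of q d n] by simp
    have "card (C y) \<ge> 2"
    proof -
      have "{0, 1} \<subseteq> C y" using sdrD(1,2)[OF sC] by auto
      hence "card {0, 1::'a} \<le> card (C y)" using finC card_mono by blast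
      thus ?thesis by simp
    qed
    hence d0: "int q ^ d - 1 \<noteq> 0" using d by (metis numeral_le_one_iff of_nat_1 of_nat_eq_iff of_nat_power right_minus_eq semiring_norm(69))
    obtain W where W: "int q ^ n - 1 = (int q ^ d - 1) * c * W" using cd[OF d(2) dn] by blast
    have "int (card G) = int (card K) * (int q ^ d - 1)"
      using os cC q2 by (simp add: of_nat_diff)
    hence e1: "int (card K) * (int q ^ d - 1) = int q ^ n - 1"
      using cardG qn1 by (simp add: of_nat_diff)
    have "int (card K) * (int q ^ d - 1) = (c * W) * (int q ^ d - 1)"
      using e1 W by (simp add: mult_ac)
    hence "int (card K) = c * W" using mult_right_cancel[OF d0] by blast
    thus ?thesis by simp
  qed
  have "c dvd (\<Sum>K\<in>A2. int (card K))" by (rule dvd_sum) (use c2 in auto)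
  hence "c dvd int q - 1" using c1 sumeq by (metis add_diff_cancel_right' dvd_diff)
  moreover have "int q - 1 \<noteq> 0" using q2 by simp
  ultimately have "\<bar>c\<bar> \<le> \<bar>int q - 1\<bar>" using dvd_imp_le_int by blast
  thus False using c q2 by simp
qed

subsection \<open>Binomial-type expansions\<close>

lemma T_sum:
  fixes T :: "'a::ring_1 \<Rightarrow> 'a"
  assumes add: "\<And>x y. T (x + y) = T x + T y"
  shows "T (sum f A) = (\<Sum>i\<in>A. T (f i))"
proof -
  have T0: "T 0 = 0" using add[of 0 0] by simp
  show ?thesis by (induction A rule: infinite_finite_induct) (auto simp: T0 add)
qed

lemma pascal_gen:
  fixes T :: "'a::ring_1 \<Rightarrow> 'a" and F :: "nat \<Rightarrow> nat \<Rightarrow> 'a"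
  assumes add: "\<And>x y. T (x + y) = T x + T y"
    and cm: "\<And>c x. T (of_nat c * x) = of_nat c * T x"
    and step: "\<And>i j. T (F i j) = F (Suc i) j + F i (Suc j)"
  shows "(T ^^ k) (F 0 0) = (\<Sum>i\<le>k. of_nat (k choose i) * F (k - i) i)"
proof (induction k)
  case 0 thus ?case by simp
next
  case (Suc k)
  have "(T ^^ Suc k) (F 0 0) = T (\<Sum>i\<le>k. of_nat (k choose i) * F (k - i) i)"
    using Suc by simp
  also have "\<dots> = (\<Sum>i\<le>k. of_nat (k choose i) * F (Suc (k - i)) i)
                 + (\<Sum>i\<le>k. of_nat (k choose i) * F (k - i) (Suc i))"
    by (simp add: T_sum[OF add] cm step distrib_left sum.distrib)
  also have "(\<Sum>i\<le>k. of_nat (k choose i) * F (Suc (k - i)) i)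
      = F (Suc k) 0 + (\<Sum>i\<le>k. of_nat (k choose Suc i) * F (k - i) (Suc i))"
  proof -
    have "(\<Sum>i\<le>Suc k. of_nat (k choose i) * F (Suc k - i) i)
        = (\<Sum>i\<le>k. of_nat (k choose i) * F (Suc k - i) i)"
      by (simp add: sum.atMost_Suc binomial_eq_0)
    also have "\<dots> = (\<Sum>i\<le>k. of_nat (k choose i) * F (Suc (k - i)) i)"
      by (rule sum.cong) (auto simp: Suc_diff_le)
    finally have e1: "(\<Sum>i\<le>Suc k. of_nat (k choose i) * F (Suc k - i) i)
        = (\<Sum>i\<le>k. of_nat (k choose i) * F (Suc (k - i)) i)" .
    have "(\<Sum>i\<le>Suc k. of_nat (k choose i) * F (Suc k - i) i)
        = F (Suc k) 0 + (\<Sum>i\<le>k. of_nat (k choose Suc i) * F (k - i) (Suc i))"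
      by (subst sum.atMost_Suc_shift) simp
    thus ?thesis using e1 by simp
  qed
  also have "F (Suc k) 0 + (\<Sum>i\<le>k. of_nat (k choose Suc i) * F (k - i) (Suc i))
      + (\<Sum>i\<le>k. of_nat (k choose i) * F (k - i) (Suc i))
      = F (Suc k) 0 + (\<Sum>i\<le>k. of_nat (Suc k choose Suc i) * F (k - i) (Suc i))"
    by (simp add: sum.distrib[symmetric] distrib_right add_ac)
  also have "\<dots> = (\<Sum>i\<le>Suc k. of_nat (Suc k choose i) * F (Suc k - i) i)"
    by (subst sum.atMost_Suc_shift) simp
  finally show ?case .
qed

lemma binomial_commute:
  fixes a b :: "'a::ring_1"
  assumes ab: "a * b = b * a"
  shows "(a + b) ^ k = (\<Sum>i\<le>k. of_nat (k choose i) * (a ^ (k - i) * b ^ i))"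
proof -
  define T where "T z = (a + b) * z" for z
  define F where "F i j = a ^ i * b ^ j" for i j
  have it: "(T ^^ k) z = (a + b) ^ k * z" for z
  proof (induction k)
    case (Suc k)
    have "(T ^^ Suc k) z = (a + b) * ((T ^^ k) z)" by (simp add: T_def)
    also have "\<dots> = (a + b) * ((a + b) ^ k * z)" using Suc by simp
    also have "\<dots> = (a + b) ^ Suc k * z" by (simp only: mult.assoc power_Suc)
    finally show ?case .
  qed simp
  have "(T ^^ k) (F 0 0) = (\<Sum>i\<le>k. of_nat (k choose i) * F (k - i) i)"
  proof (rule pascal_gen)
    show "T (x + y) = T x + T y" for x y unfolding T_def by (rule distrib_left)
    show "T (of_nat c * x) = of_nat c * T x" for c x
      unfolding T_def by (metis mult.assoc mult_of_nat_commute)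
    show "T (F i j) = F (Suc i) j + F i (Suc j)" for i j
    proof -
      have h: "b * a ^ i = a ^ i * b" using power_commuting_commutes[of a b i] ab by simp
      have e1: "a * (a ^ i * b ^ j) = a ^ Suc i * b ^ j" by (simp add: mult.assoc)
      have "b * (a ^ i * b ^ j) = (b * a ^ i) * b ^ j" by (simp add: mult.assoc)
      also have "\<dots> = a ^ i * (b * b ^ j)" by (simp add: h mult.assoc)
      finally have e2: "b * (a ^ i * b ^ j) = a ^ i * b ^ Suc j" by simp
      show ?thesis unfolding T_def F_def distrib_right e1 e2 ..
    qed
  qed
  thus ?thesis unfolding it F_def by simp
qed

definition ad :: "'a::ring \<Rightarrow> 'a \<Rightarrow> 'a" where "ad a x = a * x - x * a"

lemma ad_pow:
  fixes a x :: "'a::ring_1"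
  shows "(ad a ^^ k) x = (\<Sum>i\<le>k. of_nat (k choose i) * ((- 1) ^ i * a ^ (k - i) * x * a ^ i))"
proof -
  define F where "F i j = (- 1) ^ j * a ^ i * x * a ^ j" for i j
  have "(ad a ^^ k) (F 0 0) = (\<Sum>i\<le>k. of_nat (k choose i) * F (k - i) i)"
  proof (rule pascal_gen)
    show "ad a (x + y) = ad a x + ad a y" for x y by (simp add: ad_def distrib_left distrib_right)
    show "ad a (of_nat c * x) = of_nat c * ad a x" for c x
    proof -
      have "a * (of_nat c * x) = of_nat c * (a * x)"
        by (metis mult.assoc mult_of_nat_commute)
      moreover have "of_nat c * x * a = of_nat c * (x * a)" by (rule mult.assoc)
      ultimately show ?thesis by (simp add: ad_def right_diff_distrib)
    qed
    show "ad a (F i j) = F (Suc i) j + F i (Suc j)" for i j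
    proof -
      have h: "a * (- 1) ^ j = (- 1) ^ j * a"
        by (metis mult_minus1 mult_minus1_right power_commuting_commutes)
      have e1: "a * ((- 1) ^ j * a ^ i * x * a ^ j) = (a * (- 1) ^ j) * a ^ i * x * a ^ j"
        by (simp only: mult.assoc)
      also have "\<dots> = (- 1) ^ j * (a * a ^ i) * x * a ^ j" by (simp only: h mult.assoc)
      also have "\<dots> = (- 1) ^ j * a ^ Suc i * x * a ^ j" by (simp only: power_Suc)
      finally have e1: "a * ((- 1) ^ j * a ^ i * x * a ^ j) = (- 1) ^ j * a ^ Suc i * x * a ^ j" .
      have e2: "((- 1) ^ j * a ^ i * x * a ^ j) * a = (- 1) ^ j * a ^ i * x * a ^ Suc j"
        by (simp only: mult.assoc power_Suc2)
      show ?thesis unfolding ad_def F_def e1 e2 by simp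
    qed
  qed
  thus ?thesis by (simp add: F_def)
qed

definition cen :: "'a::ring set" where "cen = {z. \<forall>x. z * x = x * z}"

lemma cenI: "(\<And>x. z * x = x * z) \<Longrightarrow> z \<in> cen" by (simp add: cen_def)
lemma cenD: "z \<in> cen \<Longrightarrow> z * x = x * z" by (simp add: cen_def)

lemma cen_add: "a \<in> cen \<Longrightarrow> b \<in> cen \<Longrightarrow> a + b \<in> cen"
proof (rule cenI)
  fix x assume "a \<in> cen" "b \<in> cen"
  hence "a * x = x * a" "b * x = x * b" by (auto dest: cenD)
  thus "(a + b) * x = x * (a + b)" by (simp add: distrib_left distrib_right)
qed
lemma cen_mult: "a \<in> cen \<Longrightarrow> b \<in> cen \<Longrightarrow> a * b \<in> cen"
proof (rule cenI)
  fix x assume "a \<in> cen" "b \<in> cen"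
  hence h: "a * (b * x) = (b * x) * a" "b * x = x * b" by (auto dest: cenD)
  have "a * b * x = a * (b * x)" by (rule mult.assoc)
  also have "\<dots> = (x * b) * a" using h by simp
  also have "\<dots> = x * (b * a)" by (rule mult.assoc)
  also have "b * a = a * b" using cenD[OF \<open>a \<in> cen\<close>, of b] by simp
  finally show "a * b * x = x * (a * b)" .
qed
lemma cen_uminus: "a \<in> cen \<Longrightarrow> - a \<in> cen"
proof (rule cenI)
  fix x assume "a \<in> cen"
  hence "a * x = x * a" by (auto dest: cenD)
  thus "- a * x = x * - a" by simp
qed
lemma cen_diff: "a \<in> cen \<Longrightarrow> b \<in> cen \<Longrightarrow> a - b \<in> cen"
  using cen_add cen_uminus by (metis diff_conv_add_uminus)
lemma cen_inverse: "(a::'a::division_ring) \<in> cen \<Longrightarrow> inverse a \<in> cen"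
proof (rule cenI)
  fix x assume "a \<in> cen"
  hence "a * x = x * a" by (auto dest: cenD)
  thus "inverse a * x = x * inverse a" by (rule comm_inverse)
qed
lemma cen_of_nat: "(of_nat k :: 'a::ring_1) \<in> cen"
  by (rule cenI) (rule mult_of_nat_commute)
lemma cen_one: "(1 :: 'a::ring_1) \<in> cen" by (rule cenI) simp
lemma cen_zero: "(0 :: 'a::ring) \<in> cen" by (rule cenI) simp
lemma cen_power: "(a :: 'a::ring_1) \<in> cen \<Longrightarrow> a ^ k \<in> cen"
  by (induction k) (auto simp only: power_0 power_Suc intro: cen_one cen_mult)

lemma pow_mult_comm:
  fixes a b :: "'a::monoid_mult"
  assumes "a * b = b * a"
  shows "(a * b) ^ i = a ^ i * b ^ i"
proof (induction i)
  case (Suc i)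
  have h: "b * a ^ i = a ^ i * b" using power_commuting_commutes[of a b i] assms by simp
  have "(a * b) ^ Suc i = a * (b * a ^ i) * b ^ i" using Suc by (simp only: power_Suc mult.assoc)
  also have "\<dots> = (a * a ^ i) * (b * b ^ i)" by (simp only: h mult.assoc)
  finally show ?case by (simp only: power_Suc)
qed simp

lemma phi_cen: "algebra_map \<phi> \<Longrightarrow> \<phi> c \<in> cen"
  unfolding algebra_map_def cen_def by blast

lemma phi_nz:
  assumes "algebra_map (\<phi> :: 'f::field \<Rightarrow> 'r::ring_1)" "c \<noteq> 0"
  shows "\<phi> c \<noteq> 0"
proof
  assume h: "\<phi> c = 0"
  have m: "\<phi> (c * inverse c) = \<phi> c * \<phi> (inverse c)" "\<phi> 1 = 1"
    using assms(1) unfolding algebra_map_def by blast+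
  have "\<phi> (c * inverse c) = 1" using assms(2) m(2) by simp
  thus False using m(1) h by simp
qed

lemma alg_eval_lt: "alg_eval \<phi> p y = (\<Sum>i<Suc (degree p). \<phi> (coeff p i) * y ^ i)"
  by (simp add: alg_eval_def lessThan_Suc_atMost)

subsection \<open>Vandermonde-type argument\<close>

lemma div_lin:
  fixes w :: "nat \<Rightarrow> 'a::ring_1"
  assumes mu: "\<mu> \<in> cen"
  shows "\<exists>v. (\<forall>tt\<in>cen. (\<Sum>i<Suc m. tt ^ i * w i) - (\<Sum>i<Suc m. \<mu> ^ i * w i)
              = (tt - \<mu>) * (\<Sum>i<m. tt ^ i * v i)) \<and> (0 < m \<longrightarrow> v (m - 1) = w m)"
proof (induction m arbitrary: w)
  case 0 show ?case by simp
next
  case (Suc m)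
  obtain v' where v': "\<forall>tt\<in>cen. (\<Sum>i<Suc m. tt ^ i * w (Suc i)) - (\<Sum>i<Suc m. \<mu> ^ i * w (Suc i))
              = (tt - \<mu>) * (\<Sum>i<m. tt ^ i * v' i)" "0 < m \<longrightarrow> v' (m - 1) = w (Suc m)"
    using Suc[of "\<lambda>i. w (Suc i)"] by blast
  define v where "v i = w (Suc i) + (if i < m then \<mu> * v' i else 0)" for i
  have "\<forall>tt\<in>cen. (\<Sum>i<Suc (Suc m). tt ^ i * w i) - (\<Sum>i<Suc (Suc m). \<mu> ^ i * w i)
              = (tt - \<mu>) * (\<Sum>i<Suc m. tt ^ i * v i)"
  proof
    fix tt :: 'a assume l: "tt \<in> cen"
    define A where "A x = (\<Sum>i<Suc m. x ^ i * w (Suc i))" for x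
    define S' where "S' = (\<Sum>i<m. tt ^ i * v' i)"
    have sh: "(\<Sum>i<Suc (Suc m). x ^ i * w i) = w 0 + x * A x" for x
      by (subst sum.lessThan_Suc_shift) (simp add: A_def sum_distrib_left mult.assoc del: sum.lessThan_Suc)
    have "(\<Sum>i<Suc (Suc m). tt ^ i * w i) - (\<Sum>i<Suc (Suc m). \<mu> ^ i * w i)
        = tt * A tt - \<mu> * A \<mu>" by (simp only: sh) simp
    also have "\<dots> = (tt - \<mu>) * A tt + \<mu> * (A tt - A \<mu>)" by (simp add: algebra_simps)
    also have "A tt - A \<mu> = (tt - \<mu>) * S'" using v' l by (simp add: A_def S'_def)
    also have "\<mu> * ((tt - \<mu>) * S') = (tt - \<mu>) * (\<mu> * S')"
      using cenD[OF mu, of "tt - \<mu>"] by (simp add: mult.assoc[symmetric])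
    also have "(tt - \<mu>) * A tt + (tt - \<mu>) * (\<mu> * S') = (tt - \<mu>) * (A tt + \<mu> * S')"
      by (simp add: distrib_left)
    also have "A tt + \<mu> * S' = (\<Sum>i<Suc m. tt ^ i * v i)"
    proof -
      have "\<mu> * S' = (\<Sum>i<m. tt ^ i * (\<mu> * v' i))"
        unfolding S'_def sum_distrib_left
      proof (rule sum.cong)
        fix i
        have "\<mu> * (tt ^ i * v' i) = (\<mu> * tt ^ i) * v' i" by (simp only: mult.assoc)
        also have "\<dots> = (tt ^ i * \<mu>) * v' i" using cenD[OF mu, of "tt ^ i"] by simp
        also have "\<dots> = tt ^ i * (\<mu> * v' i)" by (simp only: mult.assoc)
        finally show "\<mu> * (tt ^ i * v' i) = tt ^ i * (\<mu> * v' i)" .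
      qed simp
      also have "\<dots> = (\<Sum>i<Suc m. tt ^ i * (if i < m then \<mu> * v' i else 0))"
        by simp
      finally show ?thesis by (simp add: A_def v_def distrib_left sum.distrib)
    qed
    finally show "(\<Sum>i<Suc (Suc m). tt ^ i * w i) - (\<Sum>i<Suc (Suc m). \<mu> ^ i * w i)
        = (tt - \<mu>) * (\<Sum>i<Suc m. tt ^ i * v i)" .
  qed
  moreover have "v (Suc m - 1) = w (Suc m)" by (simp add: v_def)
  ultimately show ?case by blast
qed

lemma vdm0:
  fixes w :: "nat \<Rightarrow> 'a::division_ring"
  assumes "T \<subseteq> cen" "infinite T" "\<forall>tt\<in>T. (\<Sum>i<m. tt ^ i * w i) = 0"
  shows "\<forall>i<m. w i = 0"
  using assms
proof (induction m arbitrary: w T)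
  case 0 thus ?case by simp
next
  case (Suc m)
  have "T \<noteq> {}" using Suc.prems(2) by auto
  then obtain \<mu> where mu: "\<mu> \<in> T" by auto
  have muc: "\<mu> \<in> cen" using mu Suc.prems(1) by auto
  obtain v where v: "\<forall>tt\<in>cen. (\<Sum>i<Suc m. tt ^ i * w i) - (\<Sum>i<Suc m. \<mu> ^ i * w i)
              = (tt - \<mu>) * (\<Sum>i<m. tt ^ i * v i)" "0 < m \<longrightarrow> v (m - 1) = w m"
    using div_lin[OF muc] by blast
  have wm: "w m = 0"
  proof (cases "m = 0")
    case True
    have "(\<Sum>i<Suc 0. \<mu> ^ i * w i) = 0" using Suc.prems(3) mu True by blast
    thus ?thesis using True by simp
  next
    case False
    have "\<forall>tt\<in>T - {\<mu>}. (\<Sum>i<m. tt ^ i * v i) = 0"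
    proof
      fix tt assume l: "tt \<in> T - {\<mu>}"
      hence ttc: "tt \<in> cen" "tt \<in> T" using Suc.prems(1) by auto
      have z1: "(\<Sum>i<Suc m. tt ^ i * w i) = 0" using Suc.prems(3) ttc(2) by blast
      have z2: "(\<Sum>i<Suc m. \<mu> ^ i * w i) = 0" using Suc.prems(3) mu by blast
      have "(\<Sum>i<Suc m. tt ^ i * w i) - (\<Sum>i<Suc m. \<mu> ^ i * w i) = (tt - \<mu>) * (\<Sum>i<m. tt ^ i * v i)"
        using v(1) ttc(1) by blast
      hence "(tt - \<mu>) * (\<Sum>i<m. tt ^ i * v i) = 0" using z1 z2 by simp
      thus "(\<Sum>i<m. tt ^ i * v i) = 0" using l by auto
    qed
    moreover have "T - {\<mu>} \<subseteq> cen" "infinite (T - {\<mu>})" using Suc.prems by auto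
    ultimately have "\<forall>i<m. v i = 0" using Suc.IH by blast
    thus ?thesis using v(2) False by auto
  qed
  hence "\<forall>tt\<in>T. (\<Sum>i<m. tt ^ i * w i) = 0" using Suc.prems(3) by simp
  hence "\<forall>i<m. w i = 0" using Suc.IH Suc.prems(1,2) by blast
  thus ?case using wm less_Suc_eq by auto
qed

lemma vdm:
  fixes u :: "nat \<Rightarrow> 'a::division_ring"
  assumes "T \<subseteq> cen" "infinite T" "\<forall>tt\<in>T. (\<Sum>i<m. tt ^ i * u i) \<in> cen"
  shows "\<forall>i<m. u i \<in> cen"
proof (intro allI impI cenI)
  fix i x assume i: "i < m"
  define w where "w i = u i * x - x * u i" for i
  have "\<forall>tt\<in>T. (\<Sum>i<m. tt ^ i * w i) = 0"
  proof
    fix tt assume l: "tt \<in> T"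
    have lc: "tt ^ k \<in> cen" for k using l assms(1) cen_power by auto
    have trm: "tt ^ i * w i = (tt ^ i * u i) * x - x * (tt ^ i * u i)" for i
    proof -
      have a: "x * tt ^ i = tt ^ i * x" using cenD[OF lc[of i]] by simp
      have "tt ^ i * (x * u i) = x * (tt ^ i * u i)" by (simp add: mult.assoc[symmetric] a)
      thus ?thesis by (simp add: w_def right_diff_distrib mult.assoc)
    qed
    have "(\<Sum>i<m. tt ^ i * w i) = (\<Sum>i<m. tt ^ i * u i) * x - x * (\<Sum>i<m. tt ^ i * u i)"
      unfolding trm sum_subtractf sum_distrib_right sum_distrib_left ..
    also have "\<dots> = 0" using cenD[of "\<Sum>i<m. tt ^ i * u i" x] assms(3) l by simp
    finally show "(\<Sum>i<m. tt ^ i * w i) = 0" .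
  qed
  hence "w i = 0" using vdm0[OF assms(1,2)] i by blast
  thus "u i * x = x * u i" by (simp add: w_def)
qed

lemma sum_ends:
  fixes f :: "nat \<Rightarrow> 'a::comm_monoid_add"
  assumes "0 < m" "\<And>i. 0 < i \<Longrightarrow> i < m \<Longrightarrow> f i = 0"
  shows "(\<Sum>i\<le>m. f i) = f 0 + f m"
proof -
  have "(\<Sum>i\<le>m. f i) = (\<Sum>i\<in>{0, m}. f i)"
    by (rule sum.mono_neutral_right) (use assms in auto)
  thus ?thesis using assms(1) by simp
qed

lemma conj_pow:
  fixes u y :: "'a::division_ring"
  assumes "u \<noteq> 0"
  shows "(u * y * inverse u) ^ k = u * y ^ k * inverse u"
proof (induction k)
  case 0 thus ?case using assms by simp
next
  case (Suc k)
  have "(u * y * inverse u) ^ Suc k = (u * y * inverse u) * (u * y ^ k * inverse u)"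
    using Suc by simp
  also have "\<dots> = u * y * (inverse u * u) * y ^ k * inverse u" by (simp only: mult.assoc)
  also have "\<dots> = u * y ^ Suc k * inverse u" using assms by (simp add: mult.assoc)
  finally show ?case .
qed

lemma funpow_ad_0: "(ad a ^^ k) 0 = (0::'a::ring)"
  by (induction k) (auto simp: ad_def)

lemma case_inf:
  fixes \<phi> :: "'f::field \<Rightarrow> 'r::division_ring" and p :: "'f poly" and a b :: 'r
  assumes am: "algebra_map \<phi>" and dp: "0 < degree p"
    and allc: "\<forall>y. alg_eval \<phi> p y \<in> cen" and inf: "infinite (cen :: 'r set)"
  shows "a * b = b * a"
proof (rule ccontr)
  assume nab: "a * b \<noteq> b * a"
  define n where "n = degree p"
  define c where "c i = \<phi> (coeff p i)" for i
  have cc: "c i \<in> cen" for i using phi_cen[OF am] by (simp add: c_def)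
  have cn: "c n \<noteq> 0"
  proof -
    have "p \<noteq> 0" using dp by auto
    hence "coeff p n \<noteq> 0" by (simp add: n_def)
    thus ?thesis using phi_nz[OF am] by (simp add: c_def)
  qed
  have invc: "inverse z * (z * y) = y" if "z \<noteq> 0" for z y :: 'r
    using that by (simp add: mult.assoc[symmetric])
  have pown: "y ^ n \<in> cen" for y :: 'r
  proof -
    have "\<forall>t\<in>cen. (\<Sum>i<Suc n. t ^ i * (c i * y ^ i)) \<in> cen"
    proof
      fix t :: 'r assume t: "t \<in> cen"
      have "alg_eval \<phi> p (t * y) = (\<Sum>i<Suc n. c i * (t * y) ^ i)"
        by (simp add: alg_eval_lt c_def n_def)
      also have "\<dots> = (\<Sum>i<Suc n. t ^ i * (c i * y ^ i))"
      proof (rule sum.cong)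
        fix i
        have "(t * y) ^ i = t ^ i * y ^ i" using pow_mult_comm[OF cenD[OF t]] by simp
        moreover have "c i * t ^ i = t ^ i * c i" using cenD[OF cc[of i]] by simp
        ultimately show "c i * (t * y) ^ i = t ^ i * (c i * y ^ i)"
          by (simp add: mult.assoc[symmetric])
      qed simp
      finally show "(\<Sum>i<Suc n. t ^ i * (c i * y ^ i)) \<in> cen" using allc by metis
    qed
    hence "\<forall>i<Suc n. c i * y ^ i \<in> cen"
      using vdm[where m="Suc n" and u="\<lambda>i. c i * y ^ i", OF subset_refl inf] by blast
    hence "c n * y ^ n \<in> cen" by simp
    hence "inverse (c n) * (c n * y ^ n) \<in> cen" using cen_mult cen_inverse cc by blast
    thus ?thesis using invc[OF cn] by simp
  qed
  define M where "M = {m. 0 < m \<and> (\<forall>y::'r. y ^ m \<in> cen)}"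
  have nM: "n \<in> M" using dp pown by (simp add: M_def n_def)
  define m0 where "m0 = (LEAST m. m \<in> M)"
  have m0M: "m0 \<in> M" unfolding m0_def by (rule LeastI[of "\<lambda>m. m \<in> M", OF nM])
  have m0min: "j \<notin> M" if "j < m0" for j using not_less_Least[of j "\<lambda>m. m \<in> M"] that
    by (simp add: m0_def)
  have m0pos: "0 < m0" and m0c: "\<And>y::'r. y ^ m0 \<in> cen" using m0M by (auto simp: M_def)
  have mid: "of_nat (m0 choose j) = (0::'r)" if j: "0 < j" "j < m0" for j
  proof (rule ccontr)
    assume nz: "of_nat (m0 choose j) \<noteq> (0::'r)"
    have "y ^ j \<in> cen" for y :: 'r
    proof -
      have "\<forall>t\<in>cen. (\<Sum>i<Suc m0. t ^ i * (of_nat (m0 choose i) * y ^ (m0 - i))) \<in> cen"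
      proof
        fix t :: 'r assume t: "t \<in> cen"
        have "(y + t) ^ m0 = (\<Sum>i\<le>m0. of_nat (m0 choose i) * (y ^ (m0 - i) * t ^ i))"
          by (rule binomial_commute) (use cenD[OF t] in simp)
        also have "\<dots> = (\<Sum>i<Suc m0. t ^ i * (of_nat (m0 choose i) * y ^ (m0 - i)))"
          unfolding lessThan_Suc_atMost
        proof (rule sum.cong)
          fix i
          have "y ^ (m0 - i) * t ^ i = t ^ i * y ^ (m0 - i)"
            using cenD[OF cen_power[OF t], of i "y ^ (m0 - i)"] by simp
          moreover have "of_nat (m0 choose i) * t ^ i = t ^ i * (of_nat (m0 choose i) :: 'r)"
            by (rule mult_of_nat_commute)
          ultimately show "of_nat (m0 choose i) * (y ^ (m0 - i) * t ^ i)
              = t ^ i * (of_nat (m0 choose i) * y ^ (m0 - i))"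
            by (simp add: mult.assoc[symmetric])
        qed simp
        finally show "(\<Sum>i<Suc m0. t ^ i * (of_nat (m0 choose i) * y ^ (m0 - i))) \<in> cen"
          using m0c by metis
      qed
      hence allu: "\<forall>i<Suc m0. of_nat (m0 choose i) * y ^ (m0 - i) \<in> cen"
        using vdm[where m="Suc m0" and u="\<lambda>i. of_nat (m0 choose i) * y ^ (m0 - i)", OF subset_refl inf] by blast
      have "of_nat (m0 choose (m0 - j)) * y ^ (m0 - (m0 - j)) \<in> cen"
        using allu[rule_format, of "m0 - j"] by simp
      moreover have "m0 choose (m0 - j) = m0 choose j" using binomial_symmetric[of j m0] j by simp
      moreover have "m0 - (m0 - j) = j" using j by simp
      ultimately have "of_nat (m0 choose j) * y ^ j \<in> cen" by simp
      hence "inverse (of_nat (m0 choose j)) * (of_nat (m0 choose j) * y ^ j) \<in> cen"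
        using cen_mult cen_inverse cen_of_nat by blast
      thus ?thesis using invc[OF nz] by simp
    qed
    hence "j \<in> M" using j by (simp add: M_def)
    thus False using m0min j by auto
  qed
  have m02: "m0 \<ge> 2"
  proof (rule ccontr)
    assume "\<not> m0 \<ge> 2"
    hence "m0 = 1" using m0pos by simp
    hence "a \<in> cen" using m0c[of a] by simp
    thus False using nab cenD by blast
  qed
  have minus: "(- 1 :: 'r) ^ m0 = - 1"
  proof -
    have "(0::'r) = (1 + (- 1)) ^ m0" using m0pos by simp
    also have "\<dots> = (\<Sum>i\<le>m0. of_nat (m0 choose i) * (1 ^ (m0 - i) * (- 1) ^ i))"
      by (rule binomial_commute) simp
    also have "\<dots> = 1 + (- 1) ^ m0"
      by (subst sum_ends) (use m0pos mid in auto)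
    finally show ?thesis by (simp add: eq_neg_iff_add_eq_0 add.commute)
  qed
  have adz: "(ad y ^^ m0) x = 0" for y x :: 'r
  proof -
    have "(ad y ^^ m0) x = (\<Sum>i\<le>m0. of_nat (m0 choose i) * ((- 1) ^ i * y ^ (m0 - i) * x * y ^ i))"
      by (rule ad_pow)
    also have "\<dots> = y ^ m0 * x + (- 1) ^ m0 * x * y ^ m0"
      by (subst sum_ends) (use m0pos mid in auto)
    also have "\<dots> = 0" using minus cenD[OF m0c[of y], of x] by simp
    finally show ?thesis .
  qed
  define K where "K = {k. (ad a ^^ k) b \<noteq> 0}"
  have K1: "1 \<in> K" using nab by (simp add: K_def ad_def)
  have Kb: "K \<subseteq> {..<m0}"
  proof
    fix k assume k: "k \<in> K"
    show "k \<in> {..<m0}"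
    proof (rule ccontr)
      assume "k \<notin> {..<m0}"
      hence "k = (k - m0) + m0" by simp
      hence "(ad a ^^ k) b = (ad a ^^ (k - m0)) ((ad a ^^ m0) b)" by (metis funpow_add o_apply)
      also have "\<dots> = 0" using adz funpow_ad_0 by simp
      finally show False using k by (simp add: K_def)
    qed
  qed
  have finK: "finite K" using Kb finite_subset by blast
  define k0 where "k0 = Max K"
  have k0K: "k0 \<in> K" unfolding k0_def using finK K1 Max_in by blast
  have k01: "k0 \<ge> 1" using Max_ge[OF finK K1] by (simp add: k0_def)
  have k0n: "Suc k0 \<notin> K" using Max_ge[OF finK, of "Suc k0"] by (auto simp: k0_def)
  define cc' where "cc' = (ad a ^^ (k0 - 1)) b"
  define d where "d = ad a cc'"
  have dk: "d = (ad a ^^ k0) b"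
  proof -
    obtain k1 where k1: "k0 = Suc k1" using k01 by (cases k0) auto
    have "(ad a ^^ Suc k1) b = ad a ((ad a ^^ k1) b)" by simp
    thus ?thesis using k1 by (simp add: d_def cc'_def)
  qed
  have d0: "d \<noteq> 0" using k0K dk by (simp add: K_def)
  have add0: "ad a d = 0" using k0n dk by (simp add: K_def)
  have ad: "a * d = d * a" using add0 by (simp add: ad_def)
  have aid: "a * inverse d = inverse d * a" using comm_inverse[of d a, OF ad[symmetric]] by simp
  define w where "w = inverse d * cc'"
  have adw: "a * w - w * a = 1"
  proof -
    have "a * w - w * a = inverse d * (a * cc' - cc' * a)"
      by (simp add: w_def right_diff_distrib mult.assoc[symmetric] aid)
    also have "a * cc' - cc' * a = d" by (simp add: d_def ad_def)
    finally show ?thesis using d0 by simp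
  qed
  define v where "v = w * a"
  have a0: "a \<noteq> 0" using nab by auto
  have av: "a * v = (v + 1) * a"
  proof -
    have "a * v - v * a = (a * w - w * a) * a" by (simp add: v_def left_diff_distrib mult.assoc)
    hence "a * v - v * a = a" using adw by simp
    hence "a * v = a + v * a" by (metis diff_eq_eq)
    moreover have "(v + 1) * a = v * a + a" by (simp add: distrib_right)
    ultimately show ?thesis by (simp add: add.commute)
  qed
  have conjv: "a * v * inverse a = v + 1" using av a0 by (simp add: mult.assoc)
  have "(v + 1) ^ m0 = a * v ^ m0 * inverse a" using conj_pow[OF a0, of v m0] conjv by simp
  also have "\<dots> = v ^ m0 * (a * inverse a)"
    using cenD[OF m0c[of v], of a] by (simp add: mult.assoc[symmetric])
  also have "\<dots> = v ^ m0" using a0 by simp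
  finally have e1: "(v + 1) ^ m0 = v ^ m0" .
  have "(v + 1) ^ m0 = (\<Sum>i\<le>m0. of_nat (m0 choose i) * (v ^ (m0 - i) * 1 ^ i))"
    by (rule binomial_commute) simp
  also have "\<dots> = v ^ m0 + 1" by (subst sum_ends) (use m0pos mid in auto)
  finally have "v ^ m0 + 1 = v ^ m0" using e1 by simp
  thus False by simp
qed

lemma char_facts:
  assumes fin: "finite (cen :: 'r::division_ring set)"
  shows "CHAR('r) > 0" "prime CHAR('r)"
proof -
  have "\<not> inj (of_nat :: nat \<Rightarrow> 'r)"
  proof
    assume inj: "inj (of_nat :: nat \<Rightarrow> 'r)"
    have "range (of_nat :: nat \<Rightarrow> 'r) \<subseteq> cen" using cen_of_nat by auto
    hence "finite (range (of_nat :: nat \<Rightarrow> 'r))" using fin finite_subset by blast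
    hence "finite (UNIV :: nat set)" using finite_imageD inj by blast
    thus False by simp
  qed
  then obtain i j :: nat where ij: "i \<noteq> j" "(of_nat i :: 'r) = of_nat j" unfolding inj_def by blast
  have "\<exists>n>0. (of_nat n :: 'r) = 0"
  proof (cases "i < j")
    case True
    hence "(of_nat (j - i) :: 'r) = 0" using ij by (simp add: of_nat_diff)
    thus ?thesis using True by (intro exI[of _ "j - i"]) auto
  next
    case False
    hence "j < i" using ij by simp
    hence "(of_nat (i - j) :: 'r) = 0" using ij by (simp add: of_nat_diff)
    thus ?thesis using \<open>j < i\<close> by (intro exI[of _ "i - j"]) auto
  qed
  thus pos: "CHAR('r) > 0" using CHAR_pos_iff by blast
  show "prime CHAR('r)"
    unfolding prime_nat_iff
  proof (intro conjI allI impI)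
    show "1 < CHAR('r)"
    proof -
      have h1: "CHAR('r) \<noteq> 1" using of_nat_CHAR[where 'a='r] by (metis of_nat_1 one_neq_zero)
      show ?thesis using pos h1 by arith
    qed
    fix m assume "m dvd CHAR('r)"
    then obtain k where k: "CHAR('r) = m * k" by (auto elim: dvdE)
    have "(of_nat m :: 'r) * of_nat k = 0" using k of_nat_CHAR[where 'a='r] by (metis of_nat_mult)
    hence "(of_nat m :: 'r) = 0 \<or> (of_nat k :: 'r) = 0" by simp
    hence "CHAR('r) dvd m \<or> CHAR('r) dvd k" using of_nat_eq_0_iff_char_dvd by blast
    moreover have "m > 0" "k > 0" using k pos by auto
    ultimately have "m = CHAR('r) \<or> k = CHAR('r)"
      using k by (metis dvd_antisym dvd_triv_left dvd_triv_right)
    thus "m = 1 \<or> m = CHAR('r)" using k pos by auto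
  qed
qed

lemma char_binom:
  fixes b c :: "'r::ring_1"
  assumes pr: "prime CHAR('r)" and bc: "b * c = c * b"
  shows "(b + c) ^ CHAR('r) = b ^ CHAR('r) + c ^ CHAR('r)"
proof -
  let ?p = "CHAR('r)"
  have p0: "0 < ?p" using pr prime_gt_0_nat by blast
  have "(b + c) ^ ?p = (\<Sum>i\<le>?p. of_nat (?p choose i) * (b ^ (?p - i) * c ^ i))"
    by (rule binomial_commute[OF bc])
  also have "\<dots> = b ^ ?p + c ^ ?p"
  proof (subst sum_ends[OF p0])
    fix i assume "0 < i" "i < ?p"
    hence "?p dvd (?p choose i)" using dvd_choose_prime pr by auto
    hence "(of_nat (?p choose i) :: 'r) = 0" using of_nat_eq_0_iff_char_dvd by blast
    thus "of_nat (?p choose i) * (b ^ (?p - i) * c ^ i) = 0" by simp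
  qed simp
  finally show ?thesis .
qed

lemma geom_ring:
  fixes h :: "'a::ring_1"
  shows "(h - 1) * (\<Sum>i<n. h ^ i) = h ^ n - 1"
  by (induction n) (simp_all add: distrib_left algebra_simps)

lemma ord_exists:
  fixes a :: "'a::division_ring"
  assumes "a \<noteq> 0" "finite (range (\<lambda>k. a ^ k))"
  shows "\<exists>k>0. a ^ k = 1"
proof -
  have "\<not> inj (\<lambda>k::nat. a ^ k)"
  proof
    assume "inj (\<lambda>k::nat. a ^ k)"
    hence "finite (UNIV :: nat set)" using finite_imageD assms(2) by blast
    thus False by simp
  qed
  then obtain i j where ij: "i \<noteq> j" "a ^ i = a ^ j" unfolding inj_def by blast
  have gen: "\<exists>k>0. a ^ k = 1" if "i < j" "a ^ i = a ^ j" for i j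
  proof -
    have "a ^ i * a ^ (j - i) = a ^ (i + (j - i))" by (simp add: power_add)
    also have "\<dots> = a ^ i * 1" using that by simp
    finally have "a ^ i * a ^ (j - i) = a ^ i * 1" .
    hence "a ^ (j - i) = 1" using assms(1) by (simp add: mult_left_cancel)
    thus ?thesis using that by (intro exI[of _ "j - i"]) auto
  qed
  show ?thesis
  proof (cases "i < j")
    case True thus ?thesis using gen ij by blast
  next
    case False thus ?thesis using gen[of j i] ij by simp
  qed
qed

lemma sum_if_mult:
  fixes f :: "nat \<Rightarrow> 'a::semiring_0"
  assumes "k \<in> A" "finite A"
  shows "(\<Sum>i\<in>A. (if i = k then c else 0) * f i) = c * f k"
proof -
  have "(\<Sum>i\<in>A. (if i = k then c else 0) * f i) = (\<Sum>i\<in>A. if i = k then c * f i else 0)"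
    by (rule sum.cong) auto
  also have "\<dots> = c * f k" using assms by (simp add: sum.delta)
  finally show ?thesis .
qed

lemma pow_finite:
  fixes \<phi> :: "'f::field \<Rightarrow> 'r::division_ring" and p :: "'f poly" and y :: 'r
  assumes am: "algebra_map \<phi>" and dp: "0 < degree p"
    and gy: "alg_eval \<phi> p y \<in> cen" and fin: "finite (cen :: 'r set)"
  shows "finite (range (\<lambda>k. y ^ k))"
proof -
  define n where "n = degree p"
  define c where "c i = \<phi> (coeff p i)" for i
  have cc: "c i \<in> cen" for i using phi_cen[OF am] by (simp add: c_def)
  have cn: "c n \<noteq> 0"
  proof -
    have "p \<noteq> 0" using dp by auto
    hence "coeff p n \<noteq> 0" by (simp add: n_def)
    thus ?thesis using phi_nz[OF am] by (simp add: c_def)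
  qed
  have n0: "0 < n" using dp by (simp add: n_def)
  define inV where "inV s \<longleftrightarrow> (\<exists>z. (\<forall>i. z i \<in> cen) \<and> s = (\<Sum>i<n. z i * y ^ i))" for s
  define V where "V = (\<lambda>z. \<Sum>i<n. z i * y ^ i) ` (PiE {..<n} (\<lambda>_. cen))"
  have finV: "finite V" unfolding V_def using fin by (intro finite_imageI finite_PiE) auto
  have inVV: "s \<in> V" if hs: "inV s" for s
  proof -
    obtain z where z: "\<forall>i. z i \<in> cen" "s = (\<Sum>i<n. z i * y ^ i)" using hs by (auto simp: inV_def)
    have "restrict z {..<n} \<in> PiE {..<n} (\<lambda>_. cen)" using z by auto
    moreover have "s = (\<Sum>i<n. restrict z {..<n} i * y ^ i)" using z by simp
    ultimately show ?thesis unfolding V_def by blast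
  qed
  have inV0: "inV 0" unfolding inV_def by (intro exI[of _ "\<lambda>_. 0"]) (simp add: cen_zero)
  have inVadd: "inV (s + t)" if hs: "inV s" "inV t" for s t
  proof -
    obtain z where z: "\<forall>i. z i \<in> cen" "s = (\<Sum>i<n. z i * y ^ i)" using hs(1) by (auto simp: inV_def)
    obtain z' where z': "\<forall>i. z' i \<in> cen" "t = (\<Sum>i<n. z' i * y ^ i)" using hs(2) by (auto simp: inV_def)
    show ?thesis unfolding inV_def
      by (intro exI[of _ "\<lambda>i. z i + z' i"]) (use z z' in \<open>auto simp: cen_add distrib_right sum.distrib\<close>)
  qed
  have inVmul: "inV (e * s)" if hs: "inV s" "e \<in> cen" for s e
  proof -
    obtain z where z: "\<forall>i. z i \<in> cen" "s = (\<Sum>i<n. z i * y ^ i)" using hs(1) by (auto simp: inV_def)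
    show ?thesis unfolding inV_def
      by (intro exI[of _ "\<lambda>i. e * z i"]) (use z hs(2) in \<open>auto simp: cen_mult sum_distrib_left mult.assoc\<close>)
  qed
  have inVsum: "inV (\<Sum>i\<in>A. e i * f i)" if "finite A" "\<forall>i. e i \<in> cen" "\<forall>i\<in>A. inV (f i)" for A e f
    using that by (induction A rule: finite_induct) (auto simp: inV0 inVadd inVmul)
  have inVlow: "inV (y ^ k)" if "k < n" for k
    unfolding inV_def
  proof (intro exI[of _ "\<lambda>i. if i = k then 1 else 0"] conjI allI)
    show "(if i = k then 1 else 0) \<in> (cen :: 'r set)" for i
      using cen_one[where 'a='r] cen_zero[where 'a='r] by auto
    show "y ^ k = (\<Sum>i<n. (if i = k then 1 else 0) * y ^ i)"
      using sum_if_mult[of k "{..<n}" 1 "\<lambda>i. y ^ i"] that by simp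
  qed
  define g where "g = alg_eval \<phi> p y"
  define e where "e i = inverse (c n) * ((if i = 0 then g else 0) - c i)" for i
  have ec: "e i \<in> cen" for i
  proof -
    have "(if i = 0 then g else 0) \<in> cen" using gy cen_zero[where 'a='r] by (simp add: g_def)
    hence "(if i = 0 then g else 0) - c i \<in> cen" using cc cen_diff by blast
    thus ?thesis unfolding e_def using cen_mult cen_inverse cc by blast
  qed
  have yn: "y ^ n = (\<Sum>i<n. e i * y ^ i)"
  proof -
    have "g = (\<Sum>i<n. c i * y ^ i) + c n * y ^ n"
      by (simp add: g_def alg_eval_lt c_def n_def)
    hence "c n * y ^ n = g - (\<Sum>i<n. c i * y ^ i)" by (simp add: algebra_simps)
    also have "g = (\<Sum>i<n. (if i = 0 then g else 0) * y ^ i)"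
      using sum_if_mult[of 0 "{..<n}" g "\<lambda>i. y ^ i"] n0 by simp
    finally have "c n * y ^ n = (\<Sum>i<n. ((if i = 0 then g else 0) - c i) * y ^ i)"
      by (simp add: sum_subtractf left_diff_distrib)
    hence "inverse (c n) * (c n * y ^ n) = (\<Sum>i<n. e i * y ^ i)"
      by (simp add: e_def sum_distrib_left mult.assoc)
    thus ?thesis using cn by (simp add: mult.assoc[symmetric])
  qed
  have allk: "inV (y ^ k)" for k
  proof (induction k rule: less_induct)
    case (less k)
    show ?case
    proof (cases "k < n")
      case True thus ?thesis by (rule inVlow)
    next
      case False
      have "y ^ k = y ^ (k - n) * y ^ n" using False by (simp add: power_add[symmetric])
      also have "\<dots> = (\<Sum>i<n. e i * y ^ (k - n + i))"
        unfolding yn sum_distrib_left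
      proof (rule sum.cong)
        fix i
        have "y ^ (k - n) * e i = e i * y ^ (k - n)" using cenD[OF ec[of i]] by simp
        thus "y ^ (k - n) * (e i * y ^ i) = e i * y ^ (k - n + i)"
          by (simp add: mult.assoc[symmetric] power_add)
      qed simp
      finally have "y ^ k = (\<Sum>i<n. e i * y ^ (k - n + i))" .
      moreover have "inV (\<Sum>i<n. e i * y ^ (k - n + i))"
        by (rule inVsum) (use ec less False n0 in auto)
      ultimately show ?thesis by simp
    qed
  qed
  have "range (\<lambda>k. y ^ k) \<subseteq> V" using allk inVV by auto
  thus ?thesis using finV finite_subset by blast
qed

lemma of_nat_mod_CHAR: "(of_nat (k mod CHAR('a)) :: 'a::semiring_1) = of_nat k"
proof -
  have "(of_nat k :: 'a) = of_nat (CHAR('a) * (k div CHAR('a)) + k mod CHAR('a))" by simp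
  also have "\<dots> = of_nat (k mod CHAR('a))" by (simp only: of_nat_add of_nat_mult of_nat_CHAR) simp
  finally show ?thesis by simp
qed

lemma ord_not_char:
  fixes a :: "'r::division_ring"
  assumes pr: "prime CHAR('r)" and M: "0 < M" "a ^ M = 1"
    and minM: "\<And>k. 0 < k \<Longrightarrow> k < M \<Longrightarrow> a ^ k \<noteq> 1"
  shows "(of_nat M :: 'r) \<noteq> 0"
proof
  assume "(of_nat M :: 'r) = 0"
  hence "CHAR('r) dvd M" using of_nat_eq_0_iff_char_dvd by blast
  then obtain t where t: "M = CHAR('r) * t" by (auto elim: dvdE)
  have p2: "CHAR('r) \<ge> 2" using pr prime_ge_2_nat by blast
  have t0: "0 < t" using t M(1) by (cases t) auto
  have tM: "t < M" using t t0 p2 by simp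
  define b where "b = a ^ t"
  have bp: "b ^ CHAR('r) = 1" using M(2) t by (simp add: b_def power_mult[symmetric] mult.commute)
  have "(b + (- 1)) ^ CHAR('r) = b ^ CHAR('r) + (- 1) ^ CHAR('r)"
    by (rule char_binom[OF pr]) simp
  also have "(- 1 :: 'r) ^ CHAR('r) = - (1 ^ CHAR('r))"
    by (rule minus_power_prime_CHAR) (use pr in auto)
  finally have "(b + (- 1)) ^ CHAR('r) = 0" using bp by simp
  hence "b = 1" by simp
  thus False using minM[OF t0 tM] by (simp add: b_def)
qed

lemma fourier:
  fixes a v :: "'r::division_ring"
  assumes M2: "2 \<le> M" and aM: "a ^ M = 1" and minM: "\<And>k. 0 < k \<Longrightarrow> k < M \<Longrightarrow> a ^ k \<noteq> 1"
    and Mnz: "(of_nat M :: 'r) \<noteq> 0" and va: "v * a \<noteq> a * v"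
  shows "\<exists>x j. x \<noteq> 0 \<and> j < M \<and> j \<noteq> 1 \<and> x * a = a ^ j * x"
proof (rule ccontr)
  assume no: "\<not> (\<exists>x j. x \<noteq> 0 \<and> j < M \<and> j \<noteq> 1 \<and> x * a = a ^ j * x)"
  have a0: "a \<noteq> 0" using aM M2 by (cases "a = 0") (auto simp: power_0_left)
  define P where "P j = (\<Sum>i<M. inverse (a ^ (i * j)) * v * a ^ i)" for j
  have PA: "P j * a = a ^ j * P j" for j
  proof -
    define f where "f i = inverse (a ^ (i * j)) * v * a ^ i" for i
    have fa: "f i * a = a ^ j * f (Suc i)" for i
    proof -
      have "a ^ (Suc i * j) = a ^ (i * j) * a ^ j" by (simp add: power_add[symmetric] add.commute)
      hence "inverse (a ^ (Suc i * j)) = inverse (a ^ j) * inverse (a ^ (i * j))"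
        using a0 by (simp add: nonzero_inverse_mult_distrib)
      hence "a ^ j * inverse (a ^ (Suc i * j)) = inverse (a ^ (i * j))"
        using a0 by (simp add: mult.assoc[symmetric])
      hence key: "a ^ j * inverse (a ^ (Suc i * j)) = inverse (a ^ (i * j))" .
      have e1: "f i * a = inverse (a ^ (i * j)) * v * a ^ (Suc i)"
        by (simp only: f_def power_Suc2 mult.assoc)
      have e2: "a ^ j * f (Suc i) = (a ^ j * inverse (a ^ (Suc i * j))) * v * a ^ (Suc i)"
        by (simp only: f_def mult.assoc)
      show ?thesis unfolding e1 e2 key ..
    qed
    have per: "f M = f 0"
    proof -
      have "a ^ (M * j) = 1" by (simp add: power_mult aM)
      thus ?thesis by (simp add: f_def aM)
    qed
    have sh: "(\<Sum>i<M. f (Suc i)) = (\<Sum>i<M. f i)"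
    proof -
      have "f 0 + (\<Sum>i<M. f (Suc i)) = (\<Sum>i<Suc M. f i)" by (rule sum.lessThan_Suc_shift[symmetric])
      also have "\<dots> = (\<Sum>i<M. f i) + f 0" using per by simp
      finally show ?thesis by (simp add: add.commute)
    qed
    have "P j * a = (\<Sum>i<M. f i * a)" by (simp add: P_def f_def sum_distrib_right)
    also have "\<dots> = a ^ j * (\<Sum>i<M. f (Suc i))" by (simp add: fa sum_distrib_left)
    also have "\<dots> = a ^ j * P j"
    proof -
      have Pf: "P j = (\<Sum>i<M. f i)" by (simp add: P_def f_def)
      show ?thesis by (simp only: sh Pf)
    qed
    finally show ?thesis .
  qed
  have inner: "(\<Sum>j<M. inverse (a ^ (i * j))) = (if i = 0 then of_nat M else 0)" if i: "i < M" for i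
  proof (cases "i = 0")
    case True thus ?thesis by simp
  next
    case False
    define h where "h = inverse (a ^ i)"
    have hj: "inverse (a ^ (i * j)) = h ^ j" for j by (simp add: h_def power_mult power_inverse)
    have hM: "h ^ M = 1"
    proof -
      have "(a ^ i) ^ M = 1" by (simp add: power_mult[symmetric] mult.commute power_mult aM)
      thus ?thesis by (simp add: h_def power_inverse)
    qed
    have ai: "a ^ i \<noteq> 1" using minM[of i] False i by simp
    have h1: "h \<noteq> 1"
    proof
      assume "h = 1"
      hence "inverse (inverse (a ^ i)) = inverse 1" by (simp add: h_def)
      thus False using ai by simp
    qed
    have "(h - 1) * (\<Sum>j<M. h ^ j) = 0" using geom_ring[of h M] hM by simp
    hence "(\<Sum>j<M. h ^ j) = 0" using h1 by simp
    thus ?thesis using False by (simp add: hj)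
  qed
  have PS: "(\<Sum>j<M. P j) = of_nat M * v"
  proof -
    have "(\<Sum>j<M. P j) = (\<Sum>i<M. (\<Sum>j<M. inverse (a ^ (i * j))) * (v * a ^ i))"
      unfolding P_def by (subst sum.swap) (simp add: sum_distrib_right mult.assoc)
    also have "\<dots> = (\<Sum>i<M. (if i = 0 then of_nat M else 0) * (v * a ^ i))"
      by (rule sum.cong) (simp_all add: inner)
    also have "\<dots> = of_nat M * (v * a ^ 0)"
      by (rule sum_if_mult) (use M2 in auto)
    finally show ?thesis by simp
  qed
  have Pz: "P j = 0" if "j < M" "j \<noteq> 1" for j
    using no PA that by blast
  have "(\<Sum>j<M. P j) = (\<Sum>j<M. if j = 1 then P 1 else 0)"
    by (rule sum.cong) (auto simp: Pz)
  also have "\<dots> = P 1" using M2 by (simp add: sum.delta)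
  finally have "of_nat M * v = P 1" using PS by simp
  hence "(of_nat M * v) * a = a * (of_nat M * v)" using PA[of 1] by simp
  hence "of_nat M * (v * a) = of_nat M * (a * v)"
    by (simp add: mult.assoc) (metis mult.assoc mult_of_nat_commute)
  hence "v * a = a * v" using Mnz by simp
  thus False using va by simp
qed

inductive_set addcl :: "'a::ring_1 set \<Rightarrow> 'a set" for M :: "'a set" where
  addcl_0: "0 \<in> addcl M"
| addcl_add: "m \<in> M \<Longrightarrow> s \<in> addcl M \<Longrightarrow> m + s \<in> addcl M"

lemma addcl_plus: "s \<in> addcl M \<Longrightarrow> t \<in> addcl M \<Longrightarrow> s + t \<in> addcl M"
  by (induction rule: addcl.induct) (auto simp: add.assoc intro: addcl.intros)

lemma addcl_M: "m \<in> M \<Longrightarrow> m \<in> addcl M"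
  using addcl_add[OF _ addcl_0] by simp

lemma addcl_mult:
  assumes mc: "\<forall>m\<in>M. \<forall>m'\<in>M. m * m' \<in> M"
  shows "s \<in> addcl M \<Longrightarrow> t \<in> addcl M \<Longrightarrow> s * t \<in> addcl M"
proof -
  have left: "m * t \<in> addcl M" if "m \<in> M" "t \<in> addcl M" for m t
    using that(2)
  proof (induction rule: addcl.induct)
    case addcl_0 thus ?case by (simp add: addcl.intros)
  next
    case (addcl_add m' s')
    have "m * (m' + s') = m * m' + m * s'" by (simp add: distrib_left)
    moreover have "m * m' \<in> M" using mc that(1) addcl_add by auto
    ultimately show ?case using addcl_add addcl.intros(2) by auto
  qed
  show "s \<in> addcl M \<Longrightarrow> t \<in> addcl M \<Longrightarrow> s * t \<in> addcl M"
  proof (induction rule: addcl.induct)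
    case addcl_0 thus ?case by (simp add: addcl.intros)
  next
    case (addcl_add m s)
    have e: "(m + s) * t = m * t + s * t" by (simp add: distrib_right)
    have "m * t \<in> addcl M" using left addcl_add by blast
    moreover have "s * t \<in> addcl M" using addcl_add by blast
    ultimately show ?case unfolding e by (rule addcl_plus)
  qed
qed

lemma addcl_repr:
  assumes fin: "finite M"
  shows "s \<in> addcl M \<Longrightarrow> \<exists>c. s = (\<Sum>m\<in>M. of_nat (c m) * m)"
proof (induction rule: addcl.induct)
  case addcl_0 thus ?case by (intro exI[of _ "\<lambda>_. 0"]) simp
next
  case (addcl_add m s)
  then obtain c where c: "s = (\<Sum>m\<in>M. of_nat (c m) * m)" by blast
  define c' where "c' = c(m := Suc (c m))"
  have "(\<Sum>m'\<in>M. of_nat (c' m') * m') = of_nat (c' m) * m + (\<Sum>m'\<in>M - {m}. of_nat (c' m') * m')"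
    using sum.remove[OF fin addcl_add(1)] by simp
  also have "(\<Sum>m'\<in>M - {m}. of_nat (c' m') * m') = (\<Sum>m'\<in>M - {m}. of_nat (c m') * m')"
    by (rule sum.cong) (auto simp: c'_def)
  also have "of_nat (c' m) * m = m + of_nat (c m) * m" by (simp add: c'_def distrib_right)
  also have "m + of_nat (c m) * m + (\<Sum>m'\<in>M - {m}. of_nat (c m') * m') = m + s"
    using sum.remove[OF fin addcl_add(1), of "\<lambda>m'. of_nat (c m') * m'"] c by (simp add: add.assoc)
  finally show ?case by metis
qed

lemma addcl_finite:
  assumes fin: "finite M" and pos: "CHAR('a) > 0"
  shows "finite (addcl (M :: 'a::ring_1 set))"
proof -
  let ?f = "\<lambda>c. \<Sum>m\<in>M. of_nat (c m) * m"
  have "addcl M \<subseteq> ?f ` (PiE M (\<lambda>_. {..<CHAR('a)}))"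
  proof
    fix s assume "s \<in> addcl M"
    then obtain c where c: "s = ?f c" using addcl_repr[OF fin] by blast
    define c' where "c' = restrict (\<lambda>m. c m mod CHAR('a)) M"
    have "c' \<in> PiE M (\<lambda>_. {..<CHAR('a)})" using pos by (auto simp: c'_def)
    moreover have "?f c' = s" unfolding c
      by (rule sum.cong) (auto simp: c'_def of_nat_mod_CHAR)
    ultimately show "s \<in> ?f ` (PiE M (\<lambda>_. {..<CHAR('a)}))" by blast
  qed
  moreover have "finite (?f ` (PiE M (\<lambda>_. {..<CHAR('a)})))"
    using fin by (intro finite_imageI finite_PiE) auto
  ultimately show ?thesis using finite_subset by blast
qed

lemma case_fin:
  fixes \<phi> :: "'f::field \<Rightarrow> 'r::division_ring" and p :: "'f poly" and a b :: 'r
  assumes am: "algebra_map \<phi>" and dp: "0 < degree p"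
    and allc: "\<forall>y. alg_eval \<phi> p y \<in> cen" and fin: "finite (cen :: 'r set)"
  shows "a * b = b * a"
proof (rule ccontr)
  assume nab: "a * b \<noteq> b * a"
  have pos: "CHAR('r) > 0" and pr: "prime CHAR('r)" using char_facts[OF fin] by auto
  have powfin: "finite (range (\<lambda>k. y ^ k))" for y :: 'r
    using pow_finite[OF am dp _ fin] allc by blast
  have a0: "a \<noteq> 0" using nab by auto
  obtain M0 where M0: "0 < M0" "a ^ M0 = 1" using ord_exists[OF a0 powfin] by blast
  define M where "M = (LEAST k. 0 < k \<and> a ^ k = 1)"
  have MP: "0 < M \<and> a ^ M = 1" unfolding M_def by (rule LeastI[of "\<lambda>k. 0 < k \<and> a ^ k = 1"]) (use M0 in auto)
  have minM: "a ^ k \<noteq> 1" if "0 < k" "k < M" for k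
    using not_less_Least[of k "\<lambda>k. 0 < k \<and> a ^ k = 1"] that by (auto simp: M_def)
  have Mnz: "(of_nat M :: 'r) \<noteq> 0" by (rule ord_not_char[OF pr]) (use MP minM in auto)
  have M2: "2 \<le> M"
  proof (rule ccontr)
    assume "\<not> 2 \<le> M"
    hence "M = 1" using MP by simp
    hence "a = 1" using MP by simp
    thus False using nab by simp
  qed
  obtain x j where xj: "x \<noteq> 0" "j < M" "j \<noteq> 1" "x * a = a ^ j * x"
    using fourier[OF M2 _ minM Mnz, of b] MP nab by auto
  have ajx: "a ^ j \<noteq> a"
  proof
    assume aj: "a ^ j = a"
    show False
    proof (cases "j = 0")
      case True thus False using aj nab by simp
    next
      case False
      hence "a ^ (j - 1) * a = 1 * a" using aj by (metis One_nat_def Suc_pred neq0_conv power_Suc2 mult_1)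
      hence "a ^ (j - 1) = 1" using a0 by (simp add: mult_right_cancel)
      moreover have "0 < j - 1" "j - 1 < M" using False xj(2,3) by auto
      ultimately show False using minM[of "j - 1"] by blast
    qed
  qed
  have xai: "x * a ^ i = a ^ (i * j) * x" for i
  proof (induction i)
    case (Suc i)
    have "x * a ^ Suc i = (x * a ^ i) * a" by (simp only: power_Suc2 mult.assoc)
    also have "\<dots> = a ^ (i * j) * (x * a)" using Suc by (simp add: mult.assoc)
    also have "\<dots> = a ^ (i * j) * a ^ j * x" using xj(4) by (simp add: mult.assoc)
    also have "\<dots> = a ^ (Suc i * j) * x" by (simp add: power_add[symmetric] add.commute)
    finally show ?case .
  qed simp
  have xlai: "x ^ l * a ^ i = a ^ (i * j ^ l) * x ^ l" for l i
  proof (induction l arbitrary: i)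
    case (Suc l)
    have "x ^ Suc l * a ^ i = x * (x ^ l * a ^ i)" by (simp add: mult.assoc)
    also have "\<dots> = (x * a ^ (i * j ^ l)) * x ^ l" using Suc by (simp add: mult.assoc)
    also have "\<dots> = a ^ (i * j ^ l * j) * x * x ^ l" using xai by simp
    also have "\<dots> = a ^ (i * j ^ Suc l) * x ^ Suc l" by (simp add: mult.assoc mult_ac)
    finally show ?case .
  qed simp
  define Ms where "Ms = (\<lambda>(i, l). a ^ i * x ^ l) ` (UNIV :: (nat \<times> nat) set)"
  have Msfin: "finite Ms"
  proof -
    have "Ms \<subseteq> (\<lambda>(s, t). s * t) ` (range (\<lambda>k. a ^ k) \<times> range (\<lambda>k. x ^ k))"
      unfolding Ms_def by auto
    moreover have "finite ((\<lambda>(s, t). s * t) ` (range (\<lambda>k. a ^ k) \<times> range (\<lambda>k. x ^ k)))"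
      using powfin by auto
    ultimately show ?thesis using finite_subset by blast
  qed
  have Msmul: "\<forall>m\<in>Ms. \<forall>m'\<in>Ms. m * m' \<in> Ms"
  proof (intro ballI)
    fix m m' assume "m \<in> Ms" "m' \<in> Ms"
    then obtain i l i' l' where ml: "m = a ^ i * x ^ l" "m' = a ^ i' * x ^ l'" by (auto simp: Ms_def)
    have "m * m' = a ^ i * (x ^ l * a ^ i') * x ^ l'" by (simp add: ml mult.assoc)
    also have "\<dots> = a ^ (i + i' * j ^ l) * x ^ (l + l')"
      by (simp add: xlai power_add mult.assoc)
    finally show "m * m' \<in> Ms" by (auto simp: Ms_def)
  qed
  have one: "1 \<in> Ms" unfolding Ms_def by (rule image_eqI[of _ _ "(0, 0)"]) auto
  have aM: "a \<in> Ms" unfolding Ms_def by (rule image_eqI[of _ _ "(1, 0)"]) auto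
  have xM: "x \<in> Ms" unfolding Ms_def by (rule image_eqI[of _ _ "(0, 1)"]) auto
  define S where "S = addcl Ms"
  have Sfin: "finite S" unfolding S_def by (rule addcl_finite[OF Msfin pos])
  have S1: "1 \<in> S" using addcl_M[OF one] by (simp add: S_def)
  have Sadd: "s + t \<in> S" if "s \<in> S" "t \<in> S" for s t using addcl_plus that by (simp add: S_def)
  have Smul: "s * t \<in> S" if "s \<in> S" "t \<in> S" for s t using addcl_mult[OF Msmul] that by (simp add: S_def)
  have Snat: "of_nat k \<in> S" for k
  proof (induction k)
    case 0 thus ?case by (simp add: S_def addcl.intros)
  next
    case (Suc k)
    have "(of_nat (Suc k) :: 'r) = 1 + of_nat k" by simp
    thus ?case using Suc addcl_add[OF one] by (simp add: S_def)
  qed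
  have m1: "(- 1 :: 'r) \<in> S"
  proof -
    have "(of_nat (CHAR('r) - 1) :: 'r) + 1 = of_nat (CHAR('r) - 1 + 1)" by simp
    also have "CHAR('r) - 1 + 1 = CHAR('r)" using pos by simp
    finally have "(of_nat (CHAR('r) - 1) :: 'r) = - 1" by (simp add: eq_neg_iff_add_eq_0)
    thus ?thesis using Snat by metis
  qed
  have Spow: "s ^ k \<in> S" if "s \<in> S" for s k
    by (induction k) (auto simp: S1 Smul that)
  have sdrS: "sdr S"
    unfolding sdr_def
  proof (intro conjI ballI impI)
    show "0 \<in> S" by (simp add: S_def addcl.intros)
    show "1 \<in> S" by (rule S1)
    fix s t assume st: "s \<in> S" "t \<in> S"
    show "s + t \<in> S" "s * t \<in> S" using st Sadd Smul by auto
  next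
    fix s assume s: "s \<in> S"
    show "- s \<in> S" using Smul[OF m1 s] by simp
    assume s0: "s \<noteq> 0"
    have "range (\<lambda>k. s ^ k) \<subseteq> S" using Spow s by auto
    hence "finite (range (\<lambda>k. s ^ k))" using Sfin finite_subset by blast
    then obtain k where k: "0 < k" "s ^ k = 1" using ord_exists[OF s0] by blast
    hence "s * s ^ (k - 1) = 1" by (metis Suc_diff_1 power_Suc)
    hence "inverse s = s ^ (k - 1)" by (rule inverse_unique)
    thus "inverse s \<in> S" using Spow s by simp
  qed
  have "a * x = x * a"
    using wedderburn[OF sdrS Sfin] aM xM addcl_M by (auto simp: S_def)
  hence "a * x = a ^ j * x" using xj(4) by simp
  hence "a = a ^ j" using xj(1) by (simp add: mult_right_cancel)
  thus False using ajx by simp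
qed

lemma conj_eval:
  fixes \<phi> :: "'f::field \<Rightarrow> 'r::division_ring"
  assumes am: "algebra_map \<phi>" and u: "u \<noteq> 0"
  shows "alg_eval \<phi> p (inverse u * y * u) = inverse u * alg_eval \<phi> p y * u"
proof -
  have iu: "inverse u \<noteq> 0" using u by simp
  have "alg_eval \<phi> p (inverse u * y * u) = (\<Sum>i\<le>degree p. \<phi> (coeff p i) * (inverse u * y * u) ^ i)"
    by (simp add: alg_eval_def)
  also have "\<dots> = (\<Sum>i\<le>degree p. inverse u * (\<phi> (coeff p i) * y ^ i) * u)"
  proof (rule sum.cong)
    fix i
    have "(inverse u * y * u) ^ i = inverse u * y ^ i * u"
      using conj_pow[OF iu, of y i] u by simp
    moreover have "\<phi> (coeff p i) * inverse u = inverse u * \<phi> (coeff p i)"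
      using cenD[OF phi_cen[OF am]] by simp
    ultimately show "\<phi> (coeff p i) * (inverse u * y * u) ^ i = inverse u * (\<phi> (coeff p i) * y ^ i) * u"
      by (simp add: mult.assoc[symmetric])
  qed simp
  also have "\<dots> = inverse u * alg_eval \<phi> p y * u"
    by (simp add: alg_eval_def sum_distrib_left sum_distrib_right)
  finally show ?thesis .
qed

theorem theorem2p2:
  fixes \<phi> :: "'f::field \<Rightarrow> 'r::division_ring" and p :: "'f poly"
  assumes "algebra_map \<phi>"
    and "\<exists>a b :: 'r. a * b \<noteq> b * a"
    and "degree p > 0"
  shows "\<exists>\<alpha> \<beta> :: 'r. alg_eval \<phi> p (\<alpha> * \<beta>) \<noteq> alg_eval \<phi> p (\<beta> * \<alpha>)"
proof (rule ccontr)
  assume "\<not> (\<exists>\<alpha> \<beta> :: 'r. alg_eval \<phi> p (\<alpha> * \<beta>) \<noteq> alg_eval \<phi> p (\<beta> * \<alpha>))"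
  hence H: "alg_eval \<phi> p (s * t) = alg_eval \<phi> p (t * s)" for s t :: 'r by blast
  have allc: "\<forall>y. alg_eval \<phi> p y \<in> cen"
  proof (intro allI cenI)
    fix y x :: 'r
    show "alg_eval \<phi> p y * x = x * alg_eval \<phi> p y"
    proof (cases "x = 0")
      case True thus ?thesis by simp
    next
      case False
      have "alg_eval \<phi> p y = alg_eval \<phi> p (x * (inverse x * y))" using False by (simp add: mult.assoc[symmetric])
      also have "\<dots> = alg_eval \<phi> p (inverse x * y * x)" by (rule H)
      also have "\<dots> = inverse x * alg_eval \<phi> p y * x" by (rule conj_eval[OF assms(1) False])
      finally have "x * alg_eval \<phi> p y = x * (inverse x * alg_eval \<phi> p y * x)" by simp
      also have "\<dots> = alg_eval \<phi> p y * x" using False by (simp add: mult.assoc[symmetric])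
      finally show ?thesis by simp
    qed
  qed
  obtain a b :: 'r where ab: "a * b \<noteq> b * a" using assms(2) by blast
  show False
  proof (cases "finite (cen :: 'r set)")
    case True
    thus False using case_fin[OF assms(1) assms(3) allc True, of a b] ab by simp
  next
    case False
    thus False using case_inf[OF assms(1) assms(3) allc False, of a b] ab by simp
  qed
qed

end
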